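(* Let $g\geq 2$, $\Gamma_g=\pi_1(\Sigma_g)$, and let $\rho\colon \mathrm{Aut}_+(\Gamma_g)\to\mathrm{Homeo}_+(S^1)$ be a homomorphism. If $a \in \Gamma_g$ is represented by a nonseparating simple closed curve on $\Sigma_g$, and $a$ is regarded as an element of $\mathrm{Aut}_+(\Gamma_g)$ via the identification $\Gamma_g\cong\mathrm{Inn}(\Gamma_g)\subset\mathrm{Aut}_+(\Gamma_g)$, then $\mathrm{rot}(\rho(a)) = 0$.
   Context: $\mathrm{Aut}_+(\Gamma_g)$ is the index two subgroup of $\mathrm{Aut}(\Gamma_g)$ corresponding under the Dehn–Nielsen–Baer isomorphism $\mathrm{Aut}(\Gamma_g)\cong\mathrm{Mod}^\pm_{g,1}$ to the mapping class group $\mathrm{Mod}_{g,1}$ of orientation-preserving homeomorphisms of $\Sigma_g$ fixing a marked point (the basepoint), up to isotopy; $\Gamma_g$ is centerless so $\Gamma_g\cong\mathrm{Inn}(\Gamma_g)$. For $f\in\mathrm{Homeo}_+(S^1)$, $\mathrm{rot}(f)\in\mathbb{R}/\mathbb{Z}$ is the Poincaré rotation number: the translation number $\lim_{n\to\infty}\tilde f^n(x)/n$ of any lift $\tilde f$ to the group of homeomorphisms of $\mathbb{R}$ commuting with integer translations, taken modulo $\mathbb{Z}$. *)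

theory Defs
  imports "HOL-Analysis.Analysis" "HOL-Algebra.Bij"
begin

text \<open>Generators a_1,b_1,...,a_g,b_g (indexed from 0). A letter is a generator
  together with a flag: True = the inverse of the generator.\<close>

datatype sgen = GA nat | GB nat

type_synonym sletter = "sgen \<times> bool"
type_synonym sword = "sletter list"

fun gen_idx :: "sgen \<Rightarrow> nat" where
  "gen_idx (GA i) = i" | "gen_idx (GB i) = i"

definition sletters :: "nat \<Rightarrow> sletter set" where
  "sletters g = {x. gen_idx (fst x) < g}"

definition swords :: "nat \<Rightarrow> sword set" where
  "swords g = lists (sletters g)"

definition linv :: "sletter \<Rightarrow> sletter" where
  "linv x = (fst x, \<not> snd x)"

definition relator :: "nat \<Rightarrow> sword" where
  "relator g = concat (map (\<lambda>i. [(GA i, False), (GB i, False), (GA i, True), (GB i, True)]) [0..<g])"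

inductive sg_eq :: "nat \<Rightarrow> sword \<Rightarrow> sword \<Rightarrow> bool" for g where
  sg_refl: "w \<in> swords g \<Longrightarrow> sg_eq g w w"
| sg_sym: "sg_eq g u v \<Longrightarrow> sg_eq g v u"
| sg_trans: "sg_eq g u v \<Longrightarrow> sg_eq g v w \<Longrightarrow> sg_eq g u w"
| sg_cancel: "u \<in> swords g \<Longrightarrow> v \<in> swords g \<Longrightarrow> x \<in> sletters g \<Longrightarrow>
     sg_eq g (u @ [x, linv x] @ v) (u @ v)"
| sg_rel: "u \<in> swords g \<Longrightarrow> v \<in> swords g \<Longrightarrow>
     sg_eq g (u @ relator g @ v) (u @ v)"

definition sg_rel :: "nat \<Rightarrow> (sword \<times> sword) set" where
  "sg_rel g = {(u, v). sg_eq g u v}"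

definition sg_class :: "nat \<Rightarrow> sword \<Rightarrow> sword set" where
  "sg_class g w = sg_rel g `` {w}"

definition surface_group :: "nat \<Rightarrow> sword set monoid" where
  "surface_group g =
    \<lparr>carrier = swords g // sg_rel g,
     mult = (\<lambda>X Y. sg_class g ((SOME x. x \<in> X) @ (SOME y. y \<in> Y))),
     one = sg_class g []\<rparr>"

text \<open>Abelianization: exponent-sum vector in H_1(\<Sigma>_g;Z) = Z^{2g}.\<close>
definition ab_word :: "sword \<Rightarrow> sgen \<Rightarrow> int" where
  "ab_word w s = (\<Sum>x\<leftarrow>w. if fst x = s then (if snd x then -1 else 1) else 0)"

definition ab_class :: "sword set \<Rightarrow> sgen \<Rightarrow> int" where
  "ab_class X = ab_word (SOME w. w \<in> X)"

definition isect :: "nat \<Rightarrow> (sgen \<Rightarrow> int) \<Rightarrow> (sgen \<Rightarrow> int) \<Rightarrow> int" where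
  "isect g u v = (\<Sum>i<g. u (GA i) * v (GB i) - u (GB i) * v (GA i))"

text \<open>Aut_+(\<Gamma>_g): automorphisms whose action on H_1 preserves the intersection
  form (equivalently act trivially on H_2(\<Gamma>_g;Z) = Z, i.e. come from
  orientation-preserving homeomorphisms).\<close>
definition aut_plus :: "nat \<Rightarrow> (sword set \<Rightarrow> sword set) set" where
  "aut_plus g = {\<phi> \<in> auto (surface_group g).
     \<forall>X \<in> carrier (surface_group g). \<forall>Y \<in> carrier (surface_group g).
       isect g (ab_class (\<phi> X)) (ab_class (\<phi> Y)) = isect g (ab_class X) (ab_class Y)}"

definition AutPlus :: "nat \<Rightarrow> (sword set \<Rightarrow> sword set) monoid" where
  "AutPlus g = BijGroup (carrier (surface_group g)) \<lparr>carrier := aut_plus g\<rparr>"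

definition inner_aut :: "nat \<Rightarrow> sword set \<Rightarrow> (sword set \<Rightarrow> sword set)" where
  "inner_aut g a = (\<lambda>X \<in> carrier (surface_group g).
      a \<otimes>\<^bsub>surface_group g\<^esub> X \<otimes>\<^bsub>surface_group g\<^esub> inv\<^bsub>surface_group g\<^esub> a)"

text \<open>Elements represented by nonseparating simple closed curves: the orbit
  of the standard generator a_1 under Aut(\<Gamma>_g).\<close>
definition nonsep_scc :: "nat \<Rightarrow> sword set set" where
  "nonsep_scc g = {\<phi> (sg_class g [(GA 0, False)]) | \<phi>. \<phi> \<in> auto (surface_group g)}"

definition S1 :: "complex set" where
  "S1 = sphere 0 1"

definition circ :: "real \<Rightarrow> complex" where
  "circ x = cis (2 * pi * x)"

definition is_lift :: "(complex \<Rightarrow> complex) \<Rightarrow> (real \<Rightarrow> real) \<Rightarrow> bool" where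
  "is_lift f F \<longleftrightarrow> continuous_on UNIV F \<and> strict_mono F \<and> surj F \<and>
     (\<forall>x. F (x + 1) = F x + 1) \<and> (\<forall>x. f (circ x) = circ (F x))"

definition homeo_plus :: "(complex \<Rightarrow> complex) set" where
  "homeo_plus = {f \<in> Bij S1. homeomorphism S1 S1 f (inv_into S1 f) \<and> (\<exists>F. is_lift f F)}"

definition HomeoPlus :: "(complex \<Rightarrow> complex) monoid" where
  "HomeoPlus = BijGroup S1 \<lparr>carrier := homeo_plus\<rparr>"

text \<open>Rotation number in R/Z, represented by its representative in [0,1).\<close>
definition rot :: "(complex \<Rightarrow> complex) \<Rightarrow> real" where
  "rot f = (let F = (SOME F. is_lift f F) in frac (lim (\<lambda>n. (F ^^ n) 0 / real n)))"

end

theory Submission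
  imports Defs
begin


abbreviation SG where "SG g \<equiv> surface_group g"

lemma sg_eq_swords: "sg_eq g u v \<Longrightarrow> u \<in> swords g \<and> v \<in> swords g"
  by (induction rule: sg_eq.induct)
     (auto simp: swords_def sletters_def relator_def linv_def)

lemma linv_sletters[simp]: "linv x \<in> sletters g \<longleftrightarrow> x \<in> sletters g"
  by (auto simp: linv_def sletters_def)

lemma linv_linv[simp]: "linv (linv x) = x"
  by (auto simp: linv_def)

lemma swords_append[simp]: "u @ v \<in> swords g \<longleftrightarrow> u \<in> swords g \<and> v \<in> swords g"
  by (auto simp: swords_def)

lemma swords_Cons[simp]: "x # v \<in> swords g \<longleftrightarrow> x \<in> sletters g \<and> v \<in> swords g"
  by (auto simp: swords_def)

lemma swords_Nil[simp]: "[] \<in> swords g"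
  by (auto simp: swords_def)

lemma relator_swords[simp]: "relator g \<in> swords g"
  by (auto simp: swords_def sletters_def relator_def)

lemma sg_eq_append_right: "sg_eq g u v \<Longrightarrow> w \<in> swords g \<Longrightarrow> sg_eq g (u @ w) (v @ w)"
proof (induction rule: sg_eq.induct)
  case (sg_refl w') then show ?case by (auto intro: sg_eq.sg_refl)
next
  case (sg_sym u v) then show ?case by (auto intro: sg_eq.sg_sym)
next
  case (sg_trans u v w') then show ?case by (auto intro: sg_eq.sg_trans)
next
  case (sg_cancel u v x) then show ?case using sg_eq.sg_cancel[of u g "v@w" x] by auto
next
  case (sg_rel u v) then show ?case using sg_eq.sg_rel[of u g "v@w"] by auto
qed

lemma sg_eq_append_left: "sg_eq g u v \<Longrightarrow> w \<in> swords g \<Longrightarrow> sg_eq g (w @ u) (w @ v)"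
proof (induction rule: sg_eq.induct)
  case (sg_refl w') then show ?case by (auto intro: sg_eq.sg_refl)
next
  case (sg_sym u v) then show ?case by (auto intro: sg_eq.sg_sym)
next
  case (sg_trans u v w') then show ?case by (auto intro: sg_eq.sg_trans)
next
  case (sg_cancel u v x) then show ?case using sg_eq.sg_cancel[of "w@u" g "v" x] by auto
next
  case (sg_rel u v) then show ?case using sg_eq.sg_rel[of "w@u" g "v"] by auto
qed

lemma sg_eq_append: "sg_eq g u u' \<Longrightarrow> sg_eq g v v' \<Longrightarrow> sg_eq g (u @ v) (u' @ v')"
  by (meson sg_eq.sg_trans sg_eq_append_left sg_eq_append_right sg_eq_swords)

lemma sg_rel_equiv: "equiv (swords g) (sg_rel g)"
  unfolding equiv_def refl_on_def sym_def trans_def sg_rel_def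
  by (auto dest: sg_eq_swords intro: sg_eq.intros)

lemma sg_class_eq: "sg_class g w = {v. sg_eq g w v}"
  by (auto simp: sg_class_def sg_rel_def)

lemma sg_class_eqI: "sg_eq g u v \<Longrightarrow> sg_class g u = sg_class g v"
  unfolding sg_class_eq by (auto intro: sg_eq.intros)

lemma sg_class_eq_iff: "u \<in> swords g \<Longrightarrow> sg_class g u = sg_class g v \<longleftrightarrow> sg_eq g u v"
proof
  assume u: "u \<in> swords g" and "sg_class g u = sg_class g v"
  then have "u \<in> sg_class g v" using sg_eq.sg_refl[of u g]
    by (metis mem_Collect_eq sg_class_eq)
  then show "sg_eq g u v" by (simp add: sg_class_eq sg_eq.sg_sym)
qed (rule sg_class_eqI)

lemma carrier_SG: "carrier (SG g) = sg_class g ` swords g"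
  by (auto simp: surface_group_def quotient_def sg_class_def)

lemma sg_class_in[simp]: "w \<in> swords g \<Longrightarrow> sg_class g w \<in> carrier (SG g)"
  by (simp add: carrier_SG)

lemma carrierE: assumes "X \<in> carrier (SG g)" obtains w where "w \<in> swords g" "X = sg_class g w"
  using assms by (auto simp: carrier_SG)

lemma some_class: assumes "w \<in> swords g" shows "sg_eq g w (SOME x. x \<in> sg_class g w)"
proof -
  have "w \<in> sg_class g w" using assms by (simp add: sg_class_eq sg_eq.sg_refl)
  then have "(SOME x. x \<in> sg_class g w) \<in> sg_class g w" by (rule someI)
  then show ?thesis by (simp add: sg_class_eq)
qed

lemma mult_class: "u \<in> swords g \<Longrightarrow> v \<in> swords g \<Longrightarrow>
   sg_class g u \<otimes>\<^bsub>SG g\<^esub> sg_class g v = sg_class g (u @ v)"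
  unfolding surface_group_def by (simp, rule sg_class_eqI, rule sg_eq.sg_sym,
     rule sg_eq_append[OF some_class some_class])

lemma one_SG: "\<one>\<^bsub>SG g\<^esub> = sg_class g []"
  by (simp add: surface_group_def)

definition winv :: "sword \<Rightarrow> sword" where "winv w = rev (map linv w)"

lemma winv_swords[simp]: "winv w \<in> swords g \<longleftrightarrow> w \<in> swords g"
  by (auto simp: winv_def swords_def)

lemma winv_append[simp]: "winv (u @ v) = winv v @ winv u"
  by (simp add: winv_def)

lemma winv_Cons: "winv (x # v) = winv v @ [linv x]"
  by (simp add: winv_def)

lemma winv_Nil[simp]: "winv [] = []" by (simp add: winv_def)
lemma winv_winv[simp]: "winv (winv w) = w" by (simp add: winv_def rev_map comp_def)

lemma sg_winv_r: "w \<in> swords g \<Longrightarrow> sg_eq g (w @ winv w) []"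
proof (induction w)
  case Nil then show ?case by (simp add: sg_eq.sg_refl)
next
  case (Cons x w)
  then have "sg_eq g ([x] @ (w @ winv w) @ [linv x]) ([x] @ [] @ [linv x])"
    by (intro sg_eq_append sg_eq.sg_refl) auto
  moreover have "sg_eq g ([] @ [x, linv x] @ []) ([] @ [])"
    using Cons by (intro sg_eq.sg_cancel) auto
  ultimately show ?case by (auto simp: winv_Cons intro: sg_eq.sg_trans)
qed

lemma sg_winv_l: "w \<in> swords g \<Longrightarrow> sg_eq g (winv w @ w) []"
  using sg_winv_r[of "winv w" g] by simp

lemma group_SG: "group (SG g)"
proof (rule groupI)
  fix x y assume "x \<in> carrier (SG g)" "y \<in> carrier (SG g)"
  then show "x \<otimes>\<^bsub>SG g\<^esub> y \<in> carrier (SG g)"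
    by (auto elim!: carrierE simp: mult_class)
next
  show "\<one>\<^bsub>SG g\<^esub> \<in> carrier (SG g)" by (simp add: one_SG)
next
  fix x y z assume "x \<in> carrier (SG g)" "y \<in> carrier (SG g)" "z \<in> carrier (SG g)"
  then show "x \<otimes>\<^bsub>SG g\<^esub> y \<otimes>\<^bsub>SG g\<^esub> z = x \<otimes>\<^bsub>SG g\<^esub> (y \<otimes>\<^bsub>SG g\<^esub> z)"
    by (auto elim!: carrierE simp: mult_class)
next
  fix x assume "x \<in> carrier (SG g)"
  then show "\<one>\<^bsub>SG g\<^esub> \<otimes>\<^bsub>SG g\<^esub> x = x"
    by (auto elim!: carrierE simp: mult_class one_SG)
next
  fix x assume "x \<in> carrier (SG g)"
  then obtain w where w: "w \<in> swords g" "x = sg_class g w" by (rule carrierE)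
  then have "sg_class g (winv w) \<otimes>\<^bsub>SG g\<^esub> x = \<one>\<^bsub>SG g\<^esub>"
    by (simp add: mult_class one_SG sg_class_eqI sg_winv_l)
  then show "\<exists>y\<in>carrier (SG g). y \<otimes>\<^bsub>SG g\<^esub> x = \<one>\<^bsub>SG g\<^esub>"
    using w by (intro bexI[of _ "sg_class g (winv w)"]) auto
qed

lemma inv_class: "w \<in> swords g \<Longrightarrow> inv\<^bsub>SG g\<^esub> (sg_class g w) = sg_class g (winv w)"
  by (rule group.inv_equality[OF group_SG]) (simp_all add: mult_class one_SG sg_class_eqI sg_winv_l)

lemma class_relator: "sg_class g (relator g) = \<one>\<^bsub>SG g\<^esub>"
  using sg_eq.sg_rel[of "[]" g "[]"] by (simp add: one_SG sg_class_eqI)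


definition lsub :: "(sgen \<Rightarrow> sword) \<Rightarrow> sletter \<Rightarrow> sword" where
  "lsub s x = (if snd x then winv (s (fst x)) else s (fst x))"

definition subst :: "(sgen \<Rightarrow> sword) \<Rightarrow> sword \<Rightarrow> sword" where
  "subst s w = concat (map (lsub s) w)"

lemma subst_Nil[simp]: "subst s [] = []" by (simp add: subst_def)
lemma subst_Cons[simp]: "subst s (x # w) = lsub s x @ subst s w" by (simp add: subst_def)
lemma subst_append[simp]: "subst s (u @ w) = subst s u @ subst s w" by (simp add: subst_def)

lemma lsub_linv: "lsub s (linv x) = winv (lsub s x)"
  by (simp add: lsub_def linv_def)

lemma subst_winv: "subst s (winv w) = winv (subst s w)"
  by (induction w) (simp_all add: winv_Cons lsub_linv)

definition good_sub :: "nat \<Rightarrow> (sgen \<Rightarrow> sword) \<Rightarrow> bool" where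
  "good_sub g s \<longleftrightarrow> (\<forall>t. gen_idx t < g \<longrightarrow> s t \<in> swords g) \<and> sg_eq g (subst s (relator g)) []"

lemma lsub_swords: "good_sub g s \<Longrightarrow> x \<in> sletters g \<Longrightarrow> lsub s x \<in> swords g"
  by (auto simp: good_sub_def lsub_def sletters_def)

lemma subst_swords: "good_sub g s \<Longrightarrow> w \<in> swords g \<Longrightarrow> subst s w \<in> swords g"
  by (induction w) (auto simp: lsub_swords)

lemma subst_sg_eq: assumes "good_sub g s" shows "sg_eq g u v \<Longrightarrow> sg_eq g (subst s u) (subst s v)"
proof (induction rule: sg_eq.induct)
  case (sg_refl w) then show ?case using assms by (simp add: sg_eq.sg_refl subst_swords)
next
  case (sg_sym u v) then show ?case by (blast intro: sg_eq.intros)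
next
  case (sg_trans u v w) then show ?case by (blast intro: sg_eq.intros)
next
  case (sg_cancel u v x)
  have "sg_eq g (subst s u @ (lsub s x @ winv (lsub s x)) @ subst s v) (subst s u @ [] @ subst s v)"
    using sg_cancel assms
    by (intro sg_eq_append sg_eq.sg_refl sg_winv_r) (auto simp: subst_swords lsub_swords)
  then show ?case by (simp add: lsub_linv)
next
  case (sg_rel u v)
  have "sg_eq g (subst s u @ subst s (relator g) @ subst s v) (subst s u @ [] @ subst s v)"
    using sg_rel assms
    by (intro sg_eq_append sg_eq.sg_refl) (auto simp: subst_swords good_sub_def)
  then show ?case by simp
qed

definition Tmap :: "nat \<Rightarrow> (sgen \<Rightarrow> sword) \<Rightarrow> sword set \<Rightarrow> sword set" where
  "Tmap g s = (\<lambda>X \<in> carrier (SG g). sg_class g (subst s (SOME w. w \<in> X)))"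

lemma Tmap_class: assumes "good_sub g s" "w \<in> swords g"
  shows "Tmap g s (sg_class g w) = sg_class g (subst s w)"
  using assms by (simp add: Tmap_def) (metis sg_class_eqI sg_eq.sg_sym some_class subst_sg_eq)

lemma Tmap_hom: assumes "good_sub g s" shows "Tmap g s \<in> hom (SG g) (SG g)"
proof (rule homI)
  fix X assume "X \<in> carrier (SG g)"
  then show "Tmap g s X \<in> carrier (SG g)" using assms
    by (auto elim!: carrierE simp: Tmap_class subst_swords)
next
  fix X Y assume "X \<in> carrier (SG g)" "Y \<in> carrier (SG g)"
  then show "Tmap g s (X \<otimes>\<^bsub>SG g\<^esub> Y) = Tmap g s X \<otimes>\<^bsub>SG g\<^esub> Tmap g s Y" using assms
    by (auto elim!: carrierE simp: Tmap_class subst_swords mult_class)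
qed

lemma subst_inverse:
  assumes "good_sub g s" "good_sub g s'" "\<And>t. gen_idx t < g \<Longrightarrow> sg_eq g (subst s (s' t)) [(t, False)]"
  shows "w \<in> swords g \<Longrightarrow> sg_eq g (subst s (subst s' w)) w"
proof (induction w)
  case Nil then show ?case by (simp add: sg_eq.sg_refl)
next
  case (Cons x w)
  obtain t b where x: "x = (t, b)" by force
  have t: "gen_idx t < g" using Cons x by (auto simp: sletters_def)
  have "sg_eq g (subst s (lsub s' x)) [x]"
  proof (cases b)
    case False then show ?thesis using x assms(3)[OF t] by (simp add: lsub_def)
  next
    case True
    have "sg_class g (subst s (winv (s' t))) = sg_class g (winv [(t,False)])"
      using assms(3)[OF t] assms t
      by (metis group.inv_equality group_SG inv_class lsub_def fst_conv lsub_swords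
          sg_class_eqI sg_eq_swords snd_conv subst_swords subst_winv winv_swords
          sletters_def mem_Collect_eq snd_conv)
    moreover have "subst s (winv (s' t)) \<in> swords g"
      using assms t by (simp add: subst_swords good_sub_def)
    ultimately have "sg_eq g (subst s (winv (s' t))) (winv [(t,False)])"
      using sg_class_eq_iff by blast
    then show ?thesis using x True
      by (simp add: lsub_def winv_def linv_def)
  qed
  then show ?case using Cons by (simp add: sg_eq_append[of g _ "[x]" _ w, simplified])
qed


lemma Tmap_auto:
  assumes "good_sub g s" "good_sub g s'"
    "\<And>t. gen_idx t < g \<Longrightarrow> sg_eq g (subst s (s' t)) [(t, False)]"
    "\<And>t. gen_idx t < g \<Longrightarrow> sg_eq g (subst s' (s t)) [(t, False)]"
  shows "Tmap g s \<in> auto (SG g)"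
proof -
  have inv1: "Tmap g s (Tmap g s' X) = X" if X: "X \<in> carrier (SG g)" for X
  proof -
    obtain w where "w \<in> swords g" "X = sg_class g w" using X by (rule carrierE)
    then show ?thesis using assms subst_inverse[OF assms(1,2,3)]
      by (simp add: Tmap_class subst_swords sg_class_eqI)
  qed
  have inv2: "Tmap g s' (Tmap g s X) = X" if X: "X \<in> carrier (SG g)" for X
  proof -
    obtain w where "w \<in> swords g" "X = sg_class g w" using X by (rule carrierE)
    then show ?thesis using assms subst_inverse[OF assms(2,1,4)]
      by (simp add: Tmap_class subst_swords sg_class_eqI)
  qed
  have c1: "Tmap g s X \<in> carrier (SG g)" if X: "X \<in> carrier (SG g)" for X
    using Tmap_hom[OF assms(1)] that by (auto simp: hom_def)
  have c2: "Tmap g s' X \<in> carrier (SG g)" if X: "X \<in> carrier (SG g)" for X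
    using Tmap_hom[OF assms(2)] that by (auto simp: hom_def)
  have "bij_betw (Tmap g s) (carrier (SG g)) (carrier (SG g))"
    by (rule bij_betwI[of _ _ _ "Tmap g s'"]) (auto simp: c1 c2 inv1 inv2)
  then show ?thesis using Tmap_hom[OF assms(1)]
    by (auto simp: auto_def Bij_def Tmap_def)
qed

definition aw :: "(sgen \<Rightarrow> int) \<Rightarrow> sword \<Rightarrow> int" where
  "aw \<gamma> w = (\<Sum>x\<leftarrow>w. if snd x then - \<gamma> (fst x) else \<gamma> (fst x))"

lemma aw_Nil[simp]: "aw \<gamma> [] = 0" by (simp add: aw_def)
lemma aw_Cons[simp]: "aw \<gamma> (x # w) = (if snd x then - \<gamma> (fst x) else \<gamma> (fst x)) + aw \<gamma> w"
  by (simp add: aw_def)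
lemma aw_append[simp]: "aw \<gamma> (u @ w) = aw \<gamma> u + aw \<gamma> w" by (simp add: aw_def)
lemma aw_winv[simp]: "aw \<gamma> (winv w) = - aw \<gamma> w"
  by (induction w) (auto simp: winv_Cons linv_def)

lemma relator_Suc: "relator (Suc g) = relator g @ [(GA g, False), (GB g, False), (GA g, True), (GB g, True)]"
  by (simp add: relator_def)

lemma aw_relator[simp]: "aw \<gamma> (relator g) = 0"
  by (induction g) (simp_all add: relator_Suc, simp add: relator_def)

lemma aw_sg_eq: "sg_eq g u v \<Longrightarrow> aw \<gamma> u = aw \<gamma> v"
  by (induction rule: sg_eq.induct) (auto simp: linv_def)

definition Pf :: "(sgen \<Rightarrow> int) \<Rightarrow> sword set \<Rightarrow> int" where
  "Pf \<gamma> X = aw \<gamma> (SOME w. w \<in> X)"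

lemma Pf_class: "w \<in> swords g \<Longrightarrow> Pf \<gamma> (sg_class g w) = aw \<gamma> w"
  unfolding Pf_def by (rule aw_sg_eq[OF some_class, symmetric])

lemma ab_word_aw: "ab_word w s = aw (\<lambda>t. if t = s then 1 else 0) w"
  unfolding ab_word_def aw_def by (induction w) auto

lemma ab_class_Pf: "ab_class X s = Pf (\<lambda>t. if t = s then 1 else 0) X"
  by (simp add: ab_class_def Pf_def ab_word_aw)

lemma ab_class_class: "w \<in> swords g \<Longrightarrow> ab_class (sg_class g w) = ab_word w"
  by (simp add: fun_eq_iff ab_class_Pf ab_word_aw Pf_class)

definition gsum :: "nat \<Rightarrow> (sgen \<Rightarrow> int) \<Rightarrow> int" where
  "gsum g f = (\<Sum>i<g. f (GA i) + f (GB i))"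

lemma gsum_delta: "gen_idx t < g \<Longrightarrow> gsum g (\<lambda>s. if s = t then f s else 0) = f t"
  by (cases t) (simp_all add: gsum_def sum.distrib)

lemma gsum_add: "gsum g (\<lambda>s. f s + h s) = gsum g f + gsum g h"
  by (simp add: gsum_def sum.distrib algebra_simps)

lemma gsum_cmult: "gsum g (\<lambda>s. c * f s) = c * gsum g f"
  by (simp add: gsum_def sum_distrib_left algebra_simps)

lemma gsum_cong: "(\<And>s. gen_idx s < g \<Longrightarrow> f s = h s) \<Longrightarrow> gsum g f = gsum g h"
  by (simp add: gsum_def)

lemma gsum_swap: "gsum g (\<lambda>s. gsum g (\<lambda>r. f s r)) = gsum g (\<lambda>r. gsum g (\<lambda>s. f s r))"
proof -
  define F where "F i j = f (GA i) (GA j) + f (GA i) (GB j) + f (GB i) (GA j) + f (GB i) (GB j)" for i j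
  have "gsum g (\<lambda>s. gsum g (\<lambda>r. f s r)) = (\<Sum>i<g. \<Sum>j<g. F i j)"
    unfolding gsum_def F_def by (simp add: sum.distrib algebra_simps)
  also have "\<dots> = (\<Sum>j<g. \<Sum>i<g. F i j)" by (rule sum.swap)
  also have "\<dots> = gsum g (\<lambda>r. gsum g (\<lambda>s. f s r))"
    unfolding gsum_def F_def by (simp add: sum.distrib algebra_simps)
  finally show ?thesis .
qed

lemma aw_gsum: "w \<in> swords g \<Longrightarrow> aw \<gamma> w = gsum g (\<lambda>s. \<gamma> s * ab_word w s)"
proof (induction w)
  case Nil then show ?case by (simp add: gsum_def ab_word_def)
next
  case (Cons x w)
  have e: "ab_word (x # w) s = (if fst x = s then (if snd x then -1 else 1) else 0) + ab_word w s" for s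
    by (simp add: ab_word_def)
  have "gsum g (\<lambda>s. \<gamma> s * ab_word (x # w) s) =
     gsum g (\<lambda>s. if s = fst x then \<gamma> s * (if snd x then -1 else 1) else 0) + gsum g (\<lambda>s. \<gamma> s * ab_word w s)"
    unfolding e by (subst gsum_add[symmetric]) (rule gsum_cong, auto simp: algebra_simps)
  also have "\<dots> = (if snd x then - \<gamma> (fst x) else \<gamma> (fst x)) + aw \<gamma> w"
    using Cons by (subst gsum_delta) (auto simp: sletters_def)
  finally show ?case by simp
qed

lemma Pf_gsum: "X \<in> carrier (SG g) \<Longrightarrow> Pf \<gamma> X = gsum g (\<lambda>s. \<gamma> s * ab_class X s)"
  by (auto elim!: carrierE simp: Pf_class ab_class_class aw_gsum)

lemma isect_cong: "(\<And>s. gen_idx s < g \<Longrightarrow> u s = u' s) \<Longrightarrow> (\<And>s. gen_idx s < g \<Longrightarrow> v s = v' s) \<Longrightarrow>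
   isect g u v = isect g u' v'"
  by (simp add: isect_def)


lemma aw_subst: "aw \<gamma> (subst s w) = aw (\<lambda>t. aw \<gamma> (s t)) w"
  by (induction w) (auto simp: lsub_def)

lemma aw_add: "aw (\<lambda>t. f t + h t) w = aw f w + aw h w"
  by (induction w) auto

lemma aw_delta: "aw (\<lambda>t. if t = u then c else 0) w = c * ab_word w u"
  by (induction w) (auto simp: ab_word_def algebra_simps)

lemma subst_id: "(\<And>x. x \<in> set w \<Longrightarrow> s (fst x) = [(fst x, False)]) \<Longrightarrow> subst s w = w"
  by (induction w) (auto simp: lsub_def winv_def linv_def)

definition blk :: "nat \<Rightarrow> sword" where
  "blk i = [(GA i, False), (GB i, False), (GA i, True), (GB i, True)]"

lemma relator_split: "0 < g \<Longrightarrow> relator g = blk 0 @ concat (map blk [1..<g])"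
  unfolding relator_def blk_def[abs_def] by (simp add: upt_conv_Cons)

lemma rest_letters: "x \<in> set (concat (map blk [1..<g])) \<Longrightarrow> fst x \<noteq> GB 0 \<and> fst x \<noteq> GA 0"
  by (auto simp: blk_def split: if_splits)

definition s1 :: "sgen \<Rightarrow> sword" where
  "s1 t = (if t = GB 0 then [(GB 0, False), (GA 0, False)] else [(t, False)])"

definition s1' :: "sgen \<Rightarrow> sword" where
  "s1' t = (if t = GB 0 then [(GB 0, False), (GA 0, True)] else [(t, False)])"

lemma relator_sg_eq: "sg_eq g (relator g) []"
  using sg_eq.sg_rel[of "[]" g "[]"] by simp

lemma good_s1: assumes "0 < g" shows "good_sub g s1"
proof -
  let ?r = "concat (map blk [1..<g])"
  have r: "?r \<in> swords g" using relator_swords[of g] relator_split[OF assms] by simp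
  have sr: "subst s1 ?r = ?r" by (rule subst_id, drule rest_letters, simp add: s1_def)
  have "subst s1 (relator g) = [(GA 0, False), (GB 0, False)] @ [(GA 0, False), linv (GA 0, False)] @ ([(GA 0, True), (GB 0, True)] @ ?r)"
    unfolding relator_split[OF assms] subst_append sr by (simp add: blk_def s1_def lsub_def winv_def linv_def)
  also have "sg_eq g \<dots> ([(GA 0, False), (GB 0, False)] @ ([(GA 0, True), (GB 0, True)] @ ?r))"
    using assms r by (intro sg_eq.sg_cancel) (auto simp: sletters_def)
  also have "[(GA 0, False), (GB 0, False)] @ ([(GA 0, True), (GB 0, True)] @ ?r) = relator g"
    by (simp add: relator_split[OF assms] blk_def)
  finally have "sg_eq g (subst s1 (relator g)) (relator g)" .
  then show ?thesis using assms relator_sg_eq[of g]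
    by (auto simp: good_sub_def s1_def sletters_def intro: sg_eq.sg_trans)
qed

lemma good_s1': assumes "0 < g" shows "good_sub g s1'"
proof -
  let ?r = "concat (map blk [1..<g])"
  have r: "?r \<in> swords g" using relator_swords[of g] relator_split[OF assms] by simp
  have sr: "subst s1' ?r = ?r" by (rule subst_id, drule rest_letters, simp add: s1'_def)
  have "subst s1' (relator g) = [(GA 0, False), (GB 0, False), (GA 0, True)] @ [(GA 0, True), linv (GA 0, True)] @ ([(GB 0, True)] @ ?r)"
    unfolding relator_split[OF assms] subst_append sr by (simp add: blk_def s1'_def lsub_def winv_def linv_def)
  also have "sg_eq g \<dots> ([(GA 0, False), (GB 0, False), (GA 0, True)] @ ([(GB 0, True)] @ ?r))"
    using assms r by (intro sg_eq.sg_cancel) (auto simp: sletters_def)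
  also have "[(GA 0, False), (GB 0, False), (GA 0, True)] @ ([(GB 0, True)] @ ?r) = relator g"
    by (simp add: relator_split[OF assms] blk_def)
  finally have "sg_eq g (subst s1' (relator g)) (relator g)" .
  then show ?thesis using assms relator_sg_eq[of g]
    by (auto simp: good_sub_def s1'_def sletters_def intro: sg_eq.sg_trans)
qed

lemma s1_inv1: assumes "0 < g" "gen_idx t < g" shows "sg_eq g (subst s1 (s1' t)) [(t, False)]"
proof (cases "t = GB 0")
  case True
  have "sg_eq g ([(GB 0, False)] @ [(GA 0, False), linv (GA 0, False)] @ []) ([(GB 0, False)] @ [])"
    using assms by (intro sg_eq.sg_cancel) (auto simp: sletters_def)
  then show ?thesis using True by (simp add: s1_def s1'_def lsub_def winv_def linv_def)
next
  case False
  then show ?thesis using assms by (simp add: s1_def s1'_def lsub_def sg_eq.sg_refl sletters_def)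
qed

lemma s1_inv2: assumes "0 < g" "gen_idx t < g" shows "sg_eq g (subst s1' (s1 t)) [(t, False)]"
proof (cases "t = GB 0")
  case True
  have "sg_eq g ([(GB 0, False)] @ [(GA 0, True), linv (GA 0, True)] @ []) ([(GB 0, False)] @ [])"
    using assms by (intro sg_eq.sg_cancel) (auto simp: sletters_def)
  then show ?thesis using True by (simp add: s1_def s1'_def lsub_def winv_def linv_def)
next
  case False
  then show ?thesis using assms by (simp add: s1_def s1'_def lsub_def sg_eq.sg_refl sletters_def)
qed

definition T1 :: "nat \<Rightarrow> sword set \<Rightarrow> sword set" where "T1 g = Tmap g s1"

lemma T1_auto: "0 < g \<Longrightarrow> T1 g \<in> auto (SG g)"
  unfolding T1_def by (rule Tmap_auto[OF good_s1 good_s1' s1_inv1 s1_inv2])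

lemma T1_class: "0 < g \<Longrightarrow> w \<in> swords g \<Longrightarrow> T1 g (sg_class g w) = sg_class g (subst s1 w)"
  unfolding T1_def by (rule Tmap_class[OF good_s1])

lemma ab_subst_s1: "ab_word (subst s1 w) u = ab_word w u + (if u = GA 0 then ab_word w (GB 0) else 0)"
proof -
  have "(\<lambda>t. aw (\<lambda>t. if t = u then 1 else 0) (s1 t)) =
        (\<lambda>t. (if t = u then 1 else 0) + (if t = GB 0 then (if u = GA 0 then 1 else 0) else 0))"
    by (auto simp: s1_def fun_eq_iff)
  have "ab_word (subst s1 w) u = aw (\<lambda>t. aw (\<lambda>t. if t = u then 1 else 0) (s1 t)) w"
    by (simp only: ab_word_aw aw_subst)
  also have "\<dots> = aw (\<lambda>t. if t = u then 1 else 0) w + aw (\<lambda>t. if t = GB 0 then (if u = GA 0 then 1 else 0) else 0) w"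
    unfolding \<open>(\<lambda>t. aw _ (s1 t)) = _\<close> by (rule aw_add)
  also have "\<dots> = ab_word w u + (if u = GA 0 then ab_word w (GB 0) else 0)"
    by (simp only: aw_delta ab_word_aw[symmetric]) simp
  finally show ?thesis .
qed

lemma isect_s1: "isect g (\<lambda>u. x u + (if u = GA 0 then x (GB 0) else 0)) (\<lambda>u. y u + (if u = GA 0 then y (GB 0) else 0))
   = isect g x y"
  unfolding isect_def by (rule sum.cong) (auto simp: algebra_simps)

lemma aut_plusI: "\<phi> \<in> auto (SG g) \<Longrightarrow>
  (\<And>X Y. X \<in> carrier (SG g) \<Longrightarrow> Y \<in> carrier (SG g) \<Longrightarrow>
     isect g (ab_class (\<phi> X)) (ab_class (\<phi> Y)) = isect g (ab_class X) (ab_class Y)) \<Longrightarrow> \<phi> \<in> aut_plus g"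
  by (simp add: aut_plus_def)

lemma T1_aut_plus: assumes "0 < g" shows "T1 g \<in> aut_plus g"
proof (rule aut_plusI[OF T1_auto[OF assms]])
  fix X Y assume "X \<in> carrier (SG g)" "Y \<in> carrier (SG g)"
  then obtain u v where uv: "u \<in> swords g" "X = sg_class g u" "v \<in> swords g" "Y = sg_class g v"
    by (metis carrierE)
  have su: "subst s1 u \<in> swords g" "subst s1 v \<in> swords g" using uv good_s1[OF assms] by (auto simp: subst_swords)
  show "isect g (ab_class (T1 g X)) (ab_class (T1 g Y)) = isect g (ab_class X) (ab_class Y)"
    using uv su assms
    by (simp add: T1_class ab_class_class ab_subst_s1[abs_def] isect_s1)
qed


lemma group_hom_SG: "\<phi> \<in> hom (SG g) (SG g) \<Longrightarrow> group_hom (SG g) (SG g) \<phi>"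
  by (simp add: group_hom_def group_hom_axioms_def group_SG)

lemma class_Cons: "x \<in> sletters g \<Longrightarrow> w \<in> swords g \<Longrightarrow>
  sg_class g (x # w) = sg_class g [x] \<otimes>\<^bsub>SG g\<^esub> sg_class g w"
  by (simp add: mult_class)

lemma class_neg: "gen_idx t < g \<Longrightarrow> sg_class g [(t, True)] = inv\<^bsub>SG g\<^esub> sg_class g [(t, False)]"
  by (simp add: inv_class winv_def linv_def sletters_def)

lemma Pf_mult: "X \<in> carrier (SG g) \<Longrightarrow> Y \<in> carrier (SG g) \<Longrightarrow>
   Pf \<gamma> (X \<otimes>\<^bsub>SG g\<^esub> Y) = Pf \<gamma> X + Pf \<gamma> Y"
  by (auto elim!: carrierE simp: mult_class Pf_class)

lemma Pf_inv: "X \<in> carrier (SG g) \<Longrightarrow> Pf \<gamma> (inv\<^bsub>SG g\<^esub> X) = - Pf \<gamma> X"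
  by (auto elim!: carrierE simp: inv_class Pf_class)

definition pull :: "nat \<Rightarrow> (sword set \<Rightarrow> sword set) \<Rightarrow> (sgen \<Rightarrow> int) \<Rightarrow> sgen \<Rightarrow> int" where
  "pull g \<phi> \<gamma> t = Pf \<gamma> (\<phi> (sg_class g [(t, False)]))"

lemma Pf_pull_word: assumes h: "\<phi> \<in> hom (SG g) (SG g)"
  shows "w \<in> swords g \<Longrightarrow> Pf \<gamma> (\<phi> (sg_class g w)) = aw (pull g \<phi> \<gamma>) w"
proof (induction w)
  case Nil
  interpret h: group_hom "SG g" "SG g" \<phi> by (rule group_hom_SG[OF h])
  have "\<phi> (sg_class g []) = sg_class g []" using h.hom_one by (simp add: one_SG)
  then show ?case by (simp add: Pf_class)
next
  case (Cons x w)
  interpret h: group_hom "SG g" "SG g" \<phi> by (rule group_hom_SG[OF h])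
  obtain t b where x: "x = (t, b)" by force
  have t: "gen_idx t < g" using Cons x by (simp add: sletters_def)
  have c: "sg_class g [(t, False)] \<in> carrier (SG g)" using t by (simp add: sletters_def)
  have "Pf \<gamma> (\<phi> (sg_class g (x # w))) = Pf \<gamma> (\<phi> (sg_class g [x])) + Pf \<gamma> (\<phi> (sg_class g w))"
    using Cons by (subst class_Cons[of x g w]) (simp_all add: Pf_mult h.hom_mult)
  moreover have "Pf \<gamma> (\<phi> (sg_class g [x])) = (if b then - pull g \<phi> \<gamma> t else pull g \<phi> \<gamma> t)"
    using c t x by (cases b) (simp_all add: class_neg h.hom_inv Pf_inv pull_def)
  ultimately show ?case using Cons x by simp
qed

lemma Pf_pull: "\<phi> \<in> hom (SG g) (SG g) \<Longrightarrow> X \<in> carrier (SG g) \<Longrightarrow> Pf \<gamma> (\<phi> X) = Pf (pull g \<phi> \<gamma>) X"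
  by (auto elim!: carrierE simp: Pf_pull_word Pf_class)

lemma pull_pull: assumes "\<psi> \<in> hom (SG g) (SG g)" "\<phi> \<in> hom (SG g) (SG g)"
  "\<And>X. X \<in> carrier (SG g) \<Longrightarrow> \<psi> (\<phi> X) = X" "gen_idx t < g"
  shows "pull g \<phi> (pull g \<psi> \<gamma>) t = \<gamma> t"
proof -
  have c: "sg_class g [(t, False)] \<in> carrier (SG g)" using assms(4) by (simp add: sletters_def)
  then have "\<phi> (sg_class g [(t, False)]) \<in> carrier (SG g)" using assms(2) by (auto simp: hom_def)
  then show ?thesis using assms c
    by (simp add: pull_def Pf_pull[symmetric] Pf_class sletters_def)
qed

definition Dl :: "sword set \<Rightarrow> sgen \<Rightarrow> int" where
  "Dl X t = (case t of GA i \<Rightarrow> - ab_class X (GB i) | GB i \<Rightarrow> ab_class X (GA i))"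

lemma Pf_Dl: "Y \<in> carrier (SG g) \<Longrightarrow> Pf (Dl X) Y = isect g (ab_class X) (ab_class Y)"
  by (simp add: Pf_gsum gsum_def isect_def Dl_def algebra_simps sum_subtractf)

lemma isect_Dl: assumes "Z \<in> carrier (SG g)" shows "isect g (Dl Z) \<gamma> = - Pf \<gamma> Z"
proof -
  have "isect g (Dl Z) \<gamma> + gsum g (\<lambda>s. \<gamma> s * ab_class Z s) = (\<Sum>i<g. 0)"
    unfolding isect_def gsum_def sum.distrib[symmetric] by (rule sum.cong) (auto simp: Dl_def algebra_simps)
  then show ?thesis using Pf_gsum[OF assms, of \<gamma>] by simp
qed

lemma isect_antisym: "isect g x y = - isect g y x"
  by (simp add: isect_def sum_negf[symmetric] algebra_simps)

lemma conformal_homology: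
  assumes h: "\<phi> \<in> hom (SG g) (SG g)" and hi: "\<psi> \<in> hom (SG g) (SG g)"
    and inv: "\<And>X. X \<in> carrier (SG g) \<Longrightarrow> \<psi> (\<phi> X) = X"
    and conf: "\<And>\<gamma> \<delta>. isect g (pull g \<phi> \<gamma>) (pull g \<phi> \<delta>) = k * isect g \<gamma> \<delta>"
    and X: "X \<in> carrier (SG g)" and Y: "Y \<in> carrier (SG g)"
  shows "isect g (ab_class (\<phi> X)) (ab_class (\<phi> Y)) = k * isect g (ab_class X) (ab_class Y)"
proof -
  have pX: "\<phi> X \<in> carrier (SG g)" "\<phi> Y \<in> carrier (SG g)" using h X Y by (auto simp: hom_def)
  have "isect g (ab_class (\<phi> X)) (ab_class (\<phi> Y)) = Pf (Dl (\<phi> X)) (\<phi> Y)"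
    using pX by (simp add: Pf_Dl)
  also have "\<dots> = Pf (pull g \<phi> (Dl (\<phi> X))) Y" using h Y by (simp add: Pf_pull)
  also have "\<dots> = - isect g (Dl Y) (pull g \<phi> (Dl (\<phi> X)))" using Y by (simp add: isect_Dl)
  also have "isect g (Dl Y) (pull g \<phi> (Dl (\<phi> X))) = isect g (pull g \<phi> (pull g \<psi> (Dl Y))) (pull g \<phi> (Dl (\<phi> X)))"
    by (rule isect_cong) (simp_all add: pull_pull[OF hi h inv])
  also have "\<dots> = k * isect g (pull g \<psi> (Dl Y)) (Dl (\<phi> X))" by (rule conf)
  also have "isect g (pull g \<psi> (Dl Y)) (Dl (\<phi> X)) = Pf (pull g \<psi> (Dl Y)) (\<phi> X)"
    using pX by (simp add: isect_antisym[of g "pull g \<psi> (Dl Y)"] isect_Dl)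
  also have "\<dots> = Pf (Dl Y) X" using hi pX by (simp add: Pf_pull[symmetric] inv X)
  also have "\<dots> = isect g (ab_class Y) (ab_class X)" using X by (simp add: Pf_Dl)
  finally show ?thesis by (simp add: isect_antisym[of g "ab_class Y"])
qed

lemma inner_class: "u \<in> swords g \<Longrightarrow> w \<in> swords g \<Longrightarrow>
  inner_aut g (sg_class g u) (sg_class g w) = sg_class g (u @ w @ winv u)"
  by (simp add: inner_aut_def mult_class inv_class)

lemma inner_auto: assumes a: "a \<in> carrier (SG g)" shows "inner_aut g a \<in> auto (SG g)"
proof -
  interpret G: group "SG g" by (rule group_SG)
  have h: "inner_aut g b \<in> hom (SG g) (SG g)" if "b \<in> carrier (SG g)" for b
    using that by (intro homI) (simp_all add: inner_aut_def G.m_assoc G.inv_closed, simp add: G.m_assoc[symmetric] G.l_inv)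
  have ii: "inner_aut g (inv\<^bsub>SG g\<^esub> a) (inner_aut g a X) = X" if "X \<in> carrier (SG g)" for X
    using that a by (simp add: inner_aut_def G.m_assoc G.inv_closed, simp add: G.m_assoc[symmetric] G.l_inv G.r_inv)
  have ii2: "inner_aut g a (inner_aut g (inv\<^bsub>SG g\<^esub> a) X) = X" if "X \<in> carrier (SG g)" for X
    using that a by (simp add: inner_aut_def G.m_assoc G.inv_closed, simp add: G.m_assoc[symmetric] G.l_inv G.r_inv)
  have "bij_betw (inner_aut g a) (carrier (SG g)) (carrier (SG g))"
    apply (rule bij_betwI[of _ _ _ "inner_aut g (inv\<^bsub>SG g\<^esub> a)"])
    using h[OF a] h[OF G.inv_closed[OF a]] ii ii2 by (auto simp: hom_def)
  then show ?thesis using h[OF a] by (simp add: auto_def Bij_def inner_aut_def)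
qed

lemma inner_aut_plus: assumes a: "a \<in> carrier (SG g)" shows "inner_aut g a \<in> aut_plus g"
proof (rule aut_plusI[OF inner_auto[OF a]])
  have ab: "ab_class (inner_aut g a X) = ab_class X" if X: "X \<in> carrier (SG g)" for X
  proof -
    obtain u where "u \<in> swords g" "a = sg_class g u" using a by (rule carrierE)
    moreover obtain w where "w \<in> swords g" "X = sg_class g w" using X by (rule carrierE)
    ultimately show ?thesis by (simp add: inner_class ab_class_class fun_eq_iff ab_word_aw)
  qed
  fix X Y assume "X \<in> carrier (SG g)" "Y \<in> carrier (SG g)"
  then show "isect g (ab_class (inner_aut g a X)) (ab_class (inner_aut g a Y)) = isect g (ab_class X) (ab_class Y)"
    by (simp add: ab)
qed


type_synonym heis = "int \<times> int \<times> int"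

fun hm :: "heis \<Rightarrow> heis \<Rightarrow> heis" where
  "hm (a, b, c) (a', b', c') = (a + a', b + b', c + c' + a * b')"

fun hinv :: "heis \<Rightarrow> heis" where
  "hinv (a, b, c) = (- a, - b, - c + a * b)"

lemma hm_assoc: "hm (hm x y) z = hm x (hm y z)"
  by (cases x, cases y, cases z) (simp add: algebra_simps)

lemma hm_one[simp]: "hm (0,0,0) x = x" "hm x (0,0,0) = x"
  by (cases x, simp)+

lemma hm_hinv[simp]: "hm x (hinv x) = (0,0,0)" "hm (hinv x) x = (0,0,0)"
  by (cases x, simp add: algebra_simps)+

lemma hm_fst[simp]: "fst (hm x y) = fst x + fst y" and hm_snd[simp]: "fst (snd (hm x y)) = fst (snd x) + fst (snd y)"
  by (cases x, cases y, simp)+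

lemma hinv_fst[simp]: "fst (hinv x) = - fst x" and hinv_snd[simp]: "fst (snd (hinv x)) = - fst (snd x)"
  by (cases x, simp)+

lemma hm_cancel[simp]: "hm x (hm (hinv x) y) = y"
  by (simp add: hm_assoc[symmetric])

lemma hinv_hm: "hinv (hm x y) = hm (hinv y) (hinv x)"
  by (cases x, cases y) (simp add: algebra_simps)

definition hlt :: "(sgen \<Rightarrow> heis) \<Rightarrow> sletter \<Rightarrow> heis" where
  "hlt c x = (if snd x then hinv (c (fst x)) else c (fst x))"

definition ev :: "(sgen \<Rightarrow> heis) \<Rightarrow> sword \<Rightarrow> heis" where
  "ev c w = foldr (\<lambda>x acc. hm (hlt c x) acc) w (0,0,0)"

lemma ev_Nil[simp]: "ev c [] = (0,0,0)" by (simp add: ev_def)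
lemma ev_Cons[simp]: "ev c (x # w) = hm (hlt c x) (ev c w)" by (simp add: ev_def)
lemma ev_append[simp]: "ev c (u @ w) = hm (ev c u) (ev c w)"
  by (induction u) (simp_all add: hm_assoc)

lemma hlt_linv: "hlt c (linv x) = hinv (hlt c x)"
  by (cases "c (fst x)") (simp add: hlt_def linv_def algebra_simps)

lemma ev_winv: "ev c (winv w) = hinv (ev c w)"
  by (induction w) (simp_all add: winv_Cons hinv_hm hlt_linv)

lemma ev_fst: "fst (ev c w) = aw (\<lambda>t. fst (c t)) w"
  by (induction w) (auto simp: hlt_def split: prod.splits)

lemma ev_snd: "fst (snd (ev c w)) = aw (\<lambda>t. fst (snd (c t))) w"
  by (induction w) (auto simp: hlt_def split: prod.splits)

lemma ev_relator: "ev c (relator g) = (0, 0, isect g (\<lambda>t. fst (c t)) (\<lambda>t. fst (snd (c t))))"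
proof (induction g)
  case 0 then show ?case by (simp add: relator_def isect_def)
next
  case (Suc g)
  obtain a1 b1 c1 where 1: "c (GA g) = (a1, b1, c1)" by (cases "c (GA g)") auto
  obtain a2 b2 c2 where 2: "c (GB g) = (a2, b2, c2)" by (cases "c (GB g)") auto
  show ?case using Suc 1 2 by (simp add: relator_Suc isect_def hlt_def algebra_simps)
qed

lemma ev_sg_eq: assumes "ev c (relator g) = (0,0,0)" shows "sg_eq g u v \<Longrightarrow> ev c u = ev c v"
  by (induction rule: sg_eq.induct) (simp_all add: assms hlt_linv hm_assoc)

lemma heis_isotropic:
  assumes h: "\<phi> \<in> hom (SG g) (SG g)" and iso: "isect g \<alpha> \<beta> = 0"
  shows "isect g (pull g \<phi> \<alpha>) (pull g \<phi> \<beta>) = 0"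
proof -
  interpret h: group_hom "SG g" "SG g" \<phi> by (rule group_hom_SG[OF h])
  define c where "c t = (\<alpha> t, \<beta> t, 0::int)" for t
  have rel: "ev c (relator g) = (0,0,0)" using iso by (simp add: ev_relator c_def)
  define E where "E X = ev c (SOME w. w \<in> X)" for X
  have Ec: "E (sg_class g w) = ev c w" if "w \<in> swords g" for w
    unfolding E_def using ev_sg_eq[OF rel some_class[OF that]] by simp
  have Em: "E (X \<otimes>\<^bsub>SG g\<^esub> Y) = hm (E X) (E Y)" if "X \<in> carrier (SG g)" "Y \<in> carrier (SG g)" for X Y
    using that by (auto elim!: carrierE simp: mult_class Ec)
  have Ei: "E (inv\<^bsub>SG g\<^esub> X) = hinv (E X)" if "X \<in> carrier (SG g)" for X
    using that by (auto elim!: carrierE simp: inv_class Ec ev_winv)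
  define c' where "c' t = E (\<phi> (sg_class g [(t, False)]))" for t
  have H: "E (\<phi> (sg_class g w)) = ev c' w" if "w \<in> swords g" for w
    using that
  proof (induction w)
    case Nil
    have "\<phi> (sg_class g []) = sg_class g []" using h.hom_one by (simp add: one_SG)
    then show ?case by (simp add: Ec)
  next
    case (Cons x w)
    obtain t b where x: "x = (t, b)" by force
    have t: "gen_idx t < g" using Cons x by (simp add: sletters_def)
    have cl: "sg_class g [(t, False)] \<in> carrier (SG g)" using t by (simp add: sletters_def)
    have "E (\<phi> (sg_class g (x # w))) = hm (E (\<phi> (sg_class g [x]))) (E (\<phi> (sg_class g w)))"
      using Cons by (subst class_Cons[of x g w]) (simp_all add: Em h.hom_mult)
    moreover have "E (\<phi> (sg_class g [x])) = hlt c' x"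
      using cl t x by (cases b) (simp_all add: class_neg h.hom_inv Ei c'_def hlt_def)
    ultimately show ?case using Cons by simp
  qed
  have "ev c' (relator g) = E (\<phi> (sg_class g (relator g)))" using H[of "relator g"] by simp
  also have "\<dots> = (0,0,0)"
  proof -
    have "\<phi> (sg_class g (relator g)) = sg_class g []" using h.hom_one by (simp add: class_relator one_SG)
    then show ?thesis by (simp add: Ec)
  qed
  finally have "isect g (\<lambda>t. fst (c' t)) (\<lambda>t. fst (snd (c' t))) = 0" by (simp add: ev_relator)
  moreover have "fst (c' t) = pull g \<phi> \<alpha> t" "fst (snd (c' t)) = pull g \<phi> \<beta> t" if "gen_idx t < g" for t
  proof -
    have "\<phi> (sg_class g [(t, False)]) \<in> carrier (SG g)" using that h by (auto simp: hom_def sletters_def)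
    then obtain v where v: "v \<in> swords g" "\<phi> (sg_class g [(t, False)]) = sg_class g v" by (rule carrierE)
    show "fst (c' t) = pull g \<phi> \<alpha> t" "fst (snd (c' t)) = pull g \<phi> \<beta> t"
      using v by (simp_all add: c'_def Ec pull_def Pf_class ev_fst ev_snd c_def)
  qed
  ultimately show ?thesis by (metis (no_types, lifting) isect_cong)
qed


definition ev1 :: "sgen \<Rightarrow> sgen \<Rightarrow> int" where "ev1 t = (\<lambda>s. if s = t then 1 else 0)"

definition om :: "sgen \<Rightarrow> sgen \<Rightarrow> int" where
  "om s r = (case s of GA i \<Rightarrow> if r = GB i then 1 else 0 | GB i \<Rightarrow> if r = GA i then -1 else 0)"

definition W :: "nat \<Rightarrow> (sgen \<Rightarrow> sgen \<Rightarrow> int) \<Rightarrow> (sgen \<Rightarrow> int) \<Rightarrow> (sgen \<Rightarrow> int) \<Rightarrow> int" where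
  "W g c x y = gsum g (\<lambda>s. gsum g (\<lambda>r. x s * y r * c s r))"

lemma gsum_zero[simp]: "gsum g (\<lambda>s. 0) = 0" by (simp add: gsum_def)

lemma gsum_neg: "gsum g (\<lambda>s. - f s) = - gsum g f"
  using gsum_cmult[of g "-1" f] by simp

lemma isect_ev1_GA: "j < g \<Longrightarrow> isect g (ev1 (GA j)) y = y (GB j)"
proof -
  assume j: "j < g"
  have "isect g (ev1 (GA j)) y = (\<Sum>i<g. if i = j then y (GB i) else 0)"
    unfolding isect_def by (rule sum.cong) (auto simp: ev1_def)
  then show ?thesis using j by simp
qed

lemma isect_ev1_GB: "j < g \<Longrightarrow> isect g (ev1 (GB j)) y = - y (GA j)"
proof -
  assume j: "j < g"
  have "isect g (ev1 (GB j)) y = (\<Sum>i<g. if i = j then - y (GA i) else 0)"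
    unfolding isect_def by (rule sum.cong) (auto simp: ev1_def)
  then show ?thesis using j by simp
qed

lemma W_add1: "W g c (\<lambda>s. x s + x' s) y = W g c x y + W g c x' y"
  unfolding W_def by (simp add: gsum_add[symmetric] algebra_simps)

lemma W_add2: "W g c x (\<lambda>s. y s + y' s) = W g c x y + W g c x y'"
proof -
  have "W g c x (\<lambda>s. y s + y' s) = gsum g (\<lambda>s. gsum g (\<lambda>r. x s * y r * c s r) + gsum g (\<lambda>r. x s * y' r * c s r))"
    unfolding W_def by (rule gsum_cong, subst gsum_add[symmetric], simp add: algebra_simps)
  then show ?thesis by (simp add: gsum_add W_def)
qed

lemma W_neg2: "W g c x (\<lambda>s. - y s) = - W g c x y"
proof -
  have "W g c x (\<lambda>s. - y s) = gsum g (\<lambda>s. (-1) * gsum g (\<lambda>r. x s * y r * c s r))"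
    unfolding W_def by (rule gsum_cong, subst gsum_cmult[symmetric], simp add: algebra_simps)
  then show ?thesis by (simp add: gsum_cmult W_def gsum_neg)
qed

lemma W_e: assumes "gen_idx s < g" "gen_idx r < g" shows "W g c (ev1 s) (ev1 r) = c s r"
proof -
  have "W g c (ev1 s) (ev1 r) = gsum g (\<lambda>s'. if s' = s then gsum g (\<lambda>r'. if r' = r then c s' r' else 0) else 0)"
    unfolding W_def by (rule gsum_cong) (auto simp: ev1_def intro!: gsum_cong)
  also have "\<dots> = c s r" using assms by (simp add: gsum_delta)
  finally show ?thesis .
qed

lemma isect_e: assumes "gen_idx s < g" "gen_idx r < g" shows "isect g (ev1 s) (ev1 r) = om s r"
  using assms by (cases s, simp_all add: isect_ev1_GA isect_ev1_GB) (auto simp: ev1_def om_def)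

lemma isect_expand: "isect g x y = gsum g (\<lambda>s. gsum g (\<lambda>r. x s * y r * om s r))"
proof -
  have "gsum g (\<lambda>s. gsum g (\<lambda>r. x s * y r * om s r)) =
        gsum g (\<lambda>s. case s of GA i \<Rightarrow> x (GA i) * y (GB i) | GB i \<Rightarrow> - (x (GB i) * y (GA i)))"
  proof (rule gsum_cong)
    fix s assume s: "gen_idx s < g"
    show "gsum g (\<lambda>r. x s * y r * om s r) = (case s of GA i \<Rightarrow> x (GA i) * y (GB i) | GB i \<Rightarrow> - (x (GB i) * y (GA i)))"
    proof (cases s)
      case (GA i)
      have "gsum g (\<lambda>r. x s * y r * om s r) = gsum g (\<lambda>r. if r = GB i then x s * y r else 0)"
        using GA by (intro gsum_cong) (auto simp: om_def)
      then show ?thesis using GA s by (simp add: gsum_delta)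
    next
      case (GB i)
      have "gsum g (\<lambda>r. x s * y r * om s r) = gsum g (\<lambda>r. if r = GA i then - (x s * y r) else 0)"
        using GB by (intro gsum_cong) (auto simp: om_def)
      then show ?thesis using GB s by (simp add: gsum_delta)
    qed
  qed
  then show ?thesis by (simp add: gsum_def isect_def)
qed

lemma isect_add1: "isect g (\<lambda>s. x s + x' s) y = isect g x y + isect g x' y"
  by (simp add: isect_def sum.distrib[symmetric] algebra_simps sum_subtractf[symmetric])

lemma isect_add2: "isect g x (\<lambda>s. y s + y' s) = isect g x y + isect g x y'"
  by (simp add: isect_def sum.distrib[symmetric] algebra_simps sum_subtractf[symmetric])

lemma isect_neg2: "isect g x (\<lambda>s. - y s) = - isect g x y"
  by (simp add: isect_def sum_negf[symmetric] algebra_simps)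

lemma isect_self: "isect g x x = 0"
  using isect_antisym[of g x x] by simp

lemma LA:
  assumes g: "0 < g" and hyp: "\<And>x y. isect g x y = 0 \<Longrightarrow> W g c x y = 0"
  shows "\<exists>k. \<forall>x y. W g c x y = k * isect g x y"
proof -
  define k where "k = c (GA 0) (GB 0)"
  have i: "c s r = 0" if "gen_idx s < g" "gen_idx r < g" "om s r = 0" for s r
    using hyp[of "ev1 s" "ev1 r"] that by (simp add: W_e isect_e)
  have ii: "c (GA i) (GB i) = k" if "i < g" for i
  proof (cases "i = 0")
    case True then show ?thesis by (simp add: k_def)
  next
    case False
    let ?x = "\<lambda>s. ev1 (GA i) s + ev1 (GA 0) s" and ?y = "\<lambda>r. ev1 (GB i) r + - ev1 (GB 0) r"
    have "isect g ?x ?y = 0" using that g False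
      by (simp only: isect_add1 isect_ev1_GA) (simp add: ev1_def)
    then have z: "W g c ?x ?y = 0" by (rule hyp)
    have e: "W g c ?x ?y = W g c (ev1 (GA i)) (ev1 (GB i)) + - W g c (ev1 (GA i)) (ev1 (GB 0)) +
       (W g c (ev1 (GA 0)) (ev1 (GB i)) + - W g c (ev1 (GA 0)) (ev1 (GB 0)))"
      by (simp only: W_add1 W_add2 W_neg2)
    have "c (GA i) (GB 0) = 0" "c (GA 0) (GB i) = 0" using that g False
      by (auto intro!: i simp: om_def)
    then show ?thesis using z e that g by (simp add: W_e k_def)
  qed
  have iii: "c (GB i) (GA i) = - k" if "i < g" for i
  proof -
    let ?x = "\<lambda>s. ev1 (GA i) s + ev1 (GB i) s"
    have "W g c ?x ?x = 0" by (rule hyp) (rule isect_self)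
    moreover have "W g c ?x ?x = c (GA i) (GA i) + c (GA i) (GB i) + c (GB i) (GA i) + c (GB i) (GB i)"
      using that by (simp add: W_add1 W_add2 W_e)
    moreover have "c (GA i) (GA i) = 0" "c (GB i) (GB i) = 0" using that
      by (auto intro!: i simp: om_def)
    ultimately show ?thesis using ii[OF that] by simp
  qed
  have all: "c s r = k * om s r" if "gen_idx s < g" "gen_idx r < g" for s r
  proof (cases "om s r = 0")
    case True then show ?thesis using i that by simp
  next
    case False
    then show ?thesis using that ii iii
      by (cases s; cases r) (auto simp: om_def split: if_splits)
  qed
  have "W g c x y = k * isect g x y" for x y
  proof -
    have "W g c x y = gsum g (\<lambda>s. gsum g (\<lambda>r. k * (x s * y r * om s r)))"
      unfolding W_def by (intro gsum_cong) (simp add: all)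
    also have "\<dots> = k * isect g x y" by (simp add: gsum_cmult isect_expand)
    finally show ?thesis .
  qed
  then show ?thesis by blast
qed


lemma gsum_diff: "gsum g (\<lambda>s. f s - h s) = gsum g f - gsum g h"
  by (simp add: gsum_def sum_subtractf[symmetric] algebra_simps)

lemma gsum_rmult: "gsum g (\<lambda>s. f s * c) = gsum g f * c"
  by (simp add: gsum_def sum_distrib_right distrib_right)

lemma gsum_prod: "gsum g f * gsum g h = gsum g (\<lambda>s. gsum g (\<lambda>r. f s * h r))"
  by (simp add: gsum_rmult[symmetric] gsum_cmult)

lemma sum_gsum: "(\<Sum>i<n. gsum g (F i)) = gsum g (\<lambda>s. \<Sum>i<n. F i s)"
  unfolding gsum_def by (simp add: sum.distrib sum.swap[of _ "{..<n}" "{..<g}"])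

definition mm :: "nat \<Rightarrow> (sword set \<Rightarrow> sword set) \<Rightarrow> sgen \<Rightarrow> sgen \<Rightarrow> int" where
  "mm g \<phi> t s = ab_class (\<phi> (sg_class g [(t, False)])) s"

definition cc :: "nat \<Rightarrow> (sword set \<Rightarrow> sword set) \<Rightarrow> sgen \<Rightarrow> sgen \<Rightarrow> int" where
  "cc g \<phi> s r = (\<Sum>i<g. mm g \<phi> (GA i) s * mm g \<phi> (GB i) r - mm g \<phi> (GB i) s * mm g \<phi> (GA i) r)"

lemma pull_gsum: assumes "\<phi> \<in> hom (SG g) (SG g)" "gen_idx t < g"
  shows "pull g \<phi> \<gamma> t = gsum g (\<lambda>s. \<gamma> s * mm g \<phi> t s)"
proof -
  have "\<phi> (sg_class g [(t, False)]) \<in> carrier (SG g)" using assms by (auto simp: hom_def sletters_def)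
  then show ?thesis by (simp add: pull_def Pf_gsum mm_def)
qed

lemma isect_pull_W: assumes h: "\<phi> \<in> hom (SG g) (SG g)"
  shows "isect g (pull g \<phi> \<gamma>) (pull g \<phi> \<delta>) = W g (cc g \<phi>) \<gamma> \<delta>"
proof -
  let ?m = "mm g \<phi>"
  have "isect g (pull g \<phi> \<gamma>) (pull g \<phi> \<delta>) =
    (\<Sum>i<g. gsum g (\<lambda>s. \<gamma> s * ?m (GA i) s) * gsum g (\<lambda>r. \<delta> r * ?m (GB i) r)
         - gsum g (\<lambda>s. \<gamma> s * ?m (GB i) s) * gsum g (\<lambda>r. \<delta> r * ?m (GA i) r))"
    unfolding isect_def by (rule sum.cong) (simp_all add: pull_gsum[OF h])
  also have "\<dots> = (\<Sum>i<g. gsum g (\<lambda>s. gsum g (\<lambda>r. \<gamma> s * ?m (GA i) s * (\<delta> r * ?m (GB i) r)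
         - \<gamma> s * ?m (GB i) s * (\<delta> r * ?m (GA i) r))))"
    by (simp add: gsum_prod gsum_diff)
  also have "\<dots> = gsum g (\<lambda>s. gsum g (\<lambda>r. \<Sum>i<g. \<gamma> s * ?m (GA i) s * (\<delta> r * ?m (GB i) r)
         - \<gamma> s * ?m (GB i) s * (\<delta> r * ?m (GA i) r)))"
    by (simp add: sum_gsum)
  also have "\<dots> = W g (cc g \<phi>) \<gamma> \<delta>"
    unfolding W_def cc_def
    by (intro gsum_cong) (simp add: sum_distrib_left algebra_simps)
  finally show ?thesis .
qed

lemma conformal_pull: assumes g: "0 < g" and h: "\<phi> \<in> hom (SG g) (SG g)"
  shows "\<exists>k. \<forall>\<gamma> \<delta>. isect g (pull g \<phi> \<gamma>) (pull g \<phi> \<delta>) = k * isect g \<gamma> \<delta>"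
proof -
  have "\<exists>k. \<forall>x y. W g (cc g \<phi>) x y = k * isect g x y"
    by (rule LA[OF g]) (simp add: isect_pull_W[OF h, symmetric] heis_isotropic[OF h])
  then show ?thesis by (simp add: isect_pull_W[OF h])
qed

definition ainv :: "nat \<Rightarrow> (sword set \<Rightarrow> sword set) \<Rightarrow> (sword set \<Rightarrow> sword set)" where
  "ainv g \<phi> = (\<lambda>X \<in> carrier (SG g). inv_into (carrier (SG g)) \<phi> X)"

lemma ainv_auto: "\<phi> \<in> auto (SG g) \<Longrightarrow> ainv g \<phi> \<in> auto (SG g)"
  unfolding ainv_def auto_def
  using group.restrict_inv_into_hom[OF group_SG] restrict_inv_into_Bij by blast

lemma ainv_l: "\<phi> \<in> auto (SG g) \<Longrightarrow> X \<in> carrier (SG g) \<Longrightarrow> ainv g \<phi> (\<phi> X) = X"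
  unfolding ainv_def auto_def Bij_def
  by (auto simp: bij_betw_def bij_betw_imp_funcset inv_into_f_f)

lemma ainv_r: "\<phi> \<in> auto (SG g) \<Longrightarrow> X \<in> carrier (SG g) \<Longrightarrow> \<phi> (ainv g \<phi> X) = X"
  unfolding ainv_def auto_def Bij_def
  by (auto simp: bij_betw_def f_inv_into_f)

lemma auto_closed: "\<phi> \<in> auto (SG g) \<Longrightarrow> X \<in> carrier (SG g) \<Longrightarrow> \<phi> X \<in> carrier (SG g)"
  by (auto simp: auto_def hom_def)

lemma dichotomy: assumes g: "0 < g" and \<phi>: "\<phi> \<in> auto (SG g)"
  shows "\<exists>k. \<forall>X \<in> carrier (SG g). \<forall>Y \<in> carrier (SG g).
     isect g (ab_class (\<phi> X)) (ab_class (\<phi> Y)) = k * isect g (ab_class X) (ab_class Y)"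
proof -
  have h: "\<phi> \<in> hom (SG g) (SG g)" using \<phi> by (simp add: auto_def)
  have hi: "ainv g \<phi> \<in> hom (SG g) (SG g)" using ainv_auto[OF \<phi>] by (simp add: auto_def)
  obtain k where k: "\<And>\<gamma> \<delta>. isect g (pull g \<phi> \<gamma>) (pull g \<phi> \<delta>) = k * isect g \<gamma> \<delta>"
    using conformal_pull[OF g h] by blast
  show ?thesis
    using conformal_homology[OF h hi ainv_l[OF \<phi>] k] by blast
qed

lemma conj_aut_plus:
  assumes g: "0 < g" and \<phi>: "\<phi> \<in> auto (SG g)" and T: "T \<in> aut_plus g"
  shows "compose (carrier (SG g)) \<phi> (compose (carrier (SG g)) T (ainv g \<phi>)) \<in> aut_plus g"
proof -
  let ?C = "carrier (SG g)"
  let ?T = "compose ?C \<phi> (compose ?C T (ainv g \<phi>))"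
  have Ta: "T \<in> auto (SG g)" using T by (simp add: aut_plus_def)
  have ia: "ainv g \<phi> \<in> auto (SG g)" by (rule ainv_auto[OF \<phi>])
  have val: "?T X = \<phi> (T (ainv g \<phi> X))" if "X \<in> ?C" for X
    using that by (simp add: compose_def)
  have auto: "?T \<in> auto (SG g)"
  proof -
    have "?T \<in> Bij ?C" using \<phi> Ta ia by (simp add: auto_def compose_Bij)
    moreover have "?T \<in> hom (SG g) (SG g)"
    proof (rule homI)
      fix X assume "X \<in> ?C" then show "?T X \<in> ?C" using \<phi> Ta ia by (simp add: val auto_closed)
    next
      fix X Y assume XY: "X \<in> ?C" "Y \<in> ?C"
      interpret G: group "SG g" by (rule group_SG)
      have "X \<otimes>\<^bsub>SG g\<^esub> Y \<in> ?C" using XY by simp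
      then show "?T (X \<otimes>\<^bsub>SG g\<^esub> Y) = ?T X \<otimes>\<^bsub>SG g\<^esub> ?T Y"
      proof -
        have hs: "\<phi> \<in> hom (SG g) (SG g)" "T \<in> hom (SG g) (SG g)" "ainv g \<phi> \<in> hom (SG g) (SG g)"
          using \<phi> Ta ia by (simp_all add: auto_def)
        have "ainv g \<phi> (X \<otimes>\<^bsub>SG g\<^esub> Y) = ainv g \<phi> X \<otimes>\<^bsub>SG g\<^esub> ainv g \<phi> Y"
          using hom_mult[OF hs(3) XY] .
        moreover have "T (ainv g \<phi> X \<otimes>\<^bsub>SG g\<^esub> ainv g \<phi> Y) = T (ainv g \<phi> X) \<otimes>\<^bsub>SG g\<^esub> T (ainv g \<phi> Y)"
          using hom_mult[OF hs(2)] XY ia by (simp add: auto_closed)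
        moreover have "\<phi> (T (ainv g \<phi> X) \<otimes>\<^bsub>SG g\<^esub> T (ainv g \<phi> Y)) = \<phi> (T (ainv g \<phi> X)) \<otimes>\<^bsub>SG g\<^esub> \<phi> (T (ainv g \<phi> Y))"
          using hom_mult[OF hs(1)] XY ia Ta by (simp add: auto_closed)
        ultimately show ?thesis using XY \<open>X \<otimes>\<^bsub>SG g\<^esub> Y \<in> ?C\<close> by (simp add: val)
      qed
    qed
    ultimately show ?thesis by (simp add: auto_def)
  qed
  obtain k where k: "\<And>X Y. X \<in> ?C \<Longrightarrow> Y \<in> ?C \<Longrightarrow>
     isect g (ab_class (\<phi> X)) (ab_class (\<phi> Y)) = k * isect g (ab_class X) (ab_class Y)"
    using dichotomy[OF g \<phi>] by blast
  show ?thesis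
  proof (rule aut_plusI[OF auto])
    fix X Y assume XY: "X \<in> ?C" "Y \<in> ?C"
    let ?X = "ainv g \<phi> X" and ?Y = "ainv g \<phi> Y"
    have c: "?X \<in> ?C" "?Y \<in> ?C" using XY ia by (simp_all add: auto_closed)
    have "isect g (ab_class (?T X)) (ab_class (?T Y)) = k * isect g (ab_class (T ?X)) (ab_class (T ?Y))"
      using XY c Ta by (simp add: val k auto_closed)
    also have "\<dots> = k * isect g (ab_class ?X) (ab_class ?Y)" using T c by (simp add: aut_plus_def)
    also have "\<dots> = isect g (ab_class (\<phi> ?X)) (ab_class (\<phi> ?Y))" using c by (simp add: k)
    also have "\<dots> = isect g (ab_class X) (ab_class Y)" using XY \<phi> by (simp add: ainv_r)
    finally show "isect g (ab_class (?T X)) (ab_class (?T Y)) = isect g (ab_class X) (ab_class Y)" .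
  qed
qed


definition ltype :: "(real \<Rightarrow> real) \<Rightarrow> bool" where
  "ltype F \<longleftrightarrow> mono F \<and> (\<forall>x. F (x + 1) = F x + 1)"

lemma ltype_nat: "ltype F \<Longrightarrow> F (x + real n) = F x + real n"
proof (induction n arbitrary: x)
  case 0 then show ?case by simp
next
  case (Suc n)
  have "F (x + real (Suc n)) = F ((x + real n) + 1)" by (simp add: algebra_simps)
  also have "\<dots> = F (x + real n) + 1" using Suc.prems by (simp add: ltype_def)
  finally show ?case using Suc by simp
qed

lemma ltype_int: assumes "ltype F" shows "F (x + of_int k) = F x + of_int k"
proof (cases "k \<ge> 0")
  case True
  then obtain n where "k = int n" by (metis nonneg_eq_int)
  then show ?thesis using ltype_nat[OF assms] by simp
next
  case False
  then obtain n where n: "k = - int n" by (metis linorder_not_le neg_int_cases less_le)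
  have "F ((x - real n) + real n) = F (x - real n) + real n" by (rule ltype_nat[OF assms])
  then show ?thesis using n by simp
qed

lemma ltype_mono: "ltype F \<Longrightarrow> x \<le> y \<Longrightarrow> F x \<le> F y"
  by (simp add: ltype_def mono_def)

lemma ltype_comp: "ltype F \<Longrightarrow> ltype G \<Longrightarrow> ltype (F \<circ> G)"
  by (simp add: ltype_def mono_def)

lemma ltype_pow: "ltype F \<Longrightarrow> ltype (F ^^ n)"
proof (induction n)
  case 0 then show ?case by (simp add: ltype_def mono_def)
next
  case (Suc n) then show ?case using ltype_comp[of F "F ^^ n"] by (simp add: comp_def)
qed

lemma ltype_shift: "ltype F \<Longrightarrow> ltype (\<lambda>x. F x + c)"
  by (simp add: ltype_def mono_def)

lemma ltype_bound: assumes F: "ltype F" shows "F 0 - 1 \<le> F x - x \<and> F x - x \<le> F 0 + 1"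
proof -
  define k where "k = floor x"
  have k: "of_int k \<le> x" "x < of_int k + 1" unfolding k_def by linarith+
  have "F (0 + of_int k) \<le> F x" using k by (intro ltype_mono[OF F]) simp
  moreover have "F x \<le> F (0 + of_int (k + 1))" using k by (intro ltype_mono[OF F]) simp
  ultimately have "F 0 + of_int k \<le> F x" "F x \<le> F 0 + of_int (k + 1)"
    by (simp_all only: ltype_int[OF F])
  then show ?thesis using k by simp
qed

lemma ltype_bound_abs: "ltype F \<Longrightarrow> \<bar>F x - x - F 0\<bar> \<le> 1"
  using ltype_bound[of F x] by linarith

definition tn :: "(real \<Rightarrow> real) \<Rightarrow> real" where
  "tn F = lim (\<lambda>n. (F ^^ n) 0 / real n)"

lemma a_mult: assumes F: "ltype F" shows "\<bar>(F ^^ (n * m)) 0 - real m * (F ^^ n) 0\<bar> \<le> real m"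
proof (induction m)
  case 0 then show ?case by simp
next
  case (Suc m)
  have "(F ^^ (n * Suc m)) 0 = (F ^^ n) ((F ^^ (n * m)) 0)"
    by (simp add: funpow_add)
  moreover have "\<bar>(F ^^ n) ((F ^^ (n * m)) 0) - (F ^^ (n * m)) 0 - (F ^^ n) 0\<bar> \<le> 1"
    by (rule ltype_bound_abs[OF ltype_pow[OF F]])
  ultimately show ?case using Suc by (simp add: algebra_simps)
qed

lemma a_est: assumes F: "ltype F" and "0 < n" "0 < m"
  shows "\<bar>(F ^^ n) 0 / real n - (F ^^ m) 0 / real m\<bar> \<le> 1 / real n + 1 / real m"
proof -
  let ?a = "\<lambda>k. (F ^^ k) 0"
  have 1: "\<bar>?a (n * m) / real (n * m) - ?a n / real n\<bar> \<le> 1 / real n"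
  proof -
    have "\<bar>?a (n * m) / real (n * m) - ?a n / real n\<bar> = \<bar>?a (n * m) - real m * ?a n\<bar> / real (n * m)"
      using assms by (simp add: field_simps abs_divide[symmetric])
    also have "\<dots> \<le> real m / real (n * m)"
      using a_mult[OF F, of n m] assms by (intro divide_right_mono) auto
    also have "\<dots> = 1 / real n" using assms by simp
    finally show ?thesis .
  qed
  have 2: "\<bar>?a (n * m) / real (n * m) - ?a m / real m\<bar> \<le> 1 / real m"
  proof -
    have "\<bar>?a (m * n) / real (m * n) - ?a m / real m\<bar> = \<bar>?a (m * n) - real n * ?a m\<bar> / real (m * n)"
      using assms by (simp add: field_simps abs_divide[symmetric])
    also have "\<dots> \<le> real n / real (m * n)"
      using a_mult[OF F, of m n] assms by (intro divide_right_mono) auto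
    also have "\<dots> = 1 / real m" using assms by simp
    finally show ?thesis by (simp add: mult.commute)
  qed
  show ?thesis using 1 2 by (smt (verit))
qed

lemma tn_lim: assumes F: "ltype F" shows "(\<lambda>n. (F ^^ n) 0 / real n) \<longlonglongrightarrow> tn F"
proof -
  have "Cauchy (\<lambda>n. (F ^^ n) 0 / real n)"
  proof (rule CauchyI)
    fix e :: real assume e: "0 < e"
    obtain M :: nat where M: "real M > 2 / e" using reals_Archimedean2 by blast
    have M0: "0 < M" using M e by (metis divide_pos_pos gr0I of_nat_0 order_less_asym zero_less_numeral)
    show "\<exists>M. \<forall>m\<ge>M. \<forall>n\<ge>M. norm ((F ^^ m) 0 / real m - (F ^^ n) 0 / real n) < e"
    proof (intro exI allI impI)
      fix m n assume mn: "M \<le> m" "M \<le> n"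
      have "norm ((F ^^ m) 0 / real m - (F ^^ n) 0 / real n) \<le> 1 / real m + 1 / real n"
        using a_est[OF F, of m n] mn M0 by simp
      also have "\<dots> \<le> 1 / real M + 1 / real M"
        using mn M0 by (intro add_mono; simp add: frac_le)
      also have "\<dots> = 2 / real M" by simp
      also have "\<dots> < e" using M e M0 by (simp add: field_simps)
      finally show "norm ((F ^^ m) 0 / real m - (F ^^ n) 0 / real n) < e" .
    qed
  qed
  then show ?thesis unfolding tn_def by (simp add: Cauchy_convergent_iff convergent_LIMSEQ_iff)
qed

lemma over_n_zero: assumes "\<And>n. \<bar>f n\<bar> \<le> C" shows "(\<lambda>n. f n / real n) \<longlonglongrightarrow> 0"
proof (rule Lim_null_comparison)
  show "\<forall>\<^sub>F n in sequentially. norm (f n / real n) \<le> C / real n"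
    using assms by (intro always_eventually allI) (simp add: abs_divide divide_right_mono)
  show "(\<lambda>n. C / real n) \<longlonglongrightarrow> 0" by (rule lim_const_over_n)
qed

lemma tn_bdiff: assumes F: "ltype F" and K: "ltype K" and b: "\<And>n. \<bar>(K ^^ n) 0 - (F ^^ n) 0\<bar> \<le> C"
  shows "tn K = tn F"
proof -
  have "(\<lambda>n. (F ^^ n) 0 / real n + ((K ^^ n) 0 - (F ^^ n) 0) / real n) \<longlonglongrightarrow> tn F + 0"
    by (intro tendsto_add tn_lim[OF F] over_n_zero[OF b])
  then have "(\<lambda>n. (K ^^ n) 0 / real n) \<longlonglongrightarrow> tn F" by (simp add: diff_divide_distrib)
  then show ?thesis using tn_lim[OF K] LIMSEQ_unique by blast
qed

lemma pow_shift: assumes F: "ltype F"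
  shows "((\<lambda>x. F x + of_int m) ^^ n) x = (F ^^ n) x + real n * of_int m"
proof (induction n)
  case 0 then show ?case by simp
next
  case (Suc n)
  have "F ((F ^^ n) x + of_int (int n * m)) = F ((F ^^ n) x) + of_int (int n * m)"
    by (rule ltype_int[OF F])
  then show ?case using Suc by (simp add: algebra_simps)
qed

lemma tn_shift: assumes F: "ltype F" shows "tn (\<lambda>x. F x + of_int m) = tn F + of_int m"
proof -
  have "(\<lambda>n. (F ^^ n) 0 / real n + of_int m) \<longlonglongrightarrow> tn F + of_int m"
    by (intro tendsto_add tn_lim[OF F] tendsto_const)
  moreover have "\<forall>\<^sub>F n in sequentially. (F ^^ n) 0 / real n + of_int m = ((\<lambda>x. F x + of_int m) ^^ n) 0 / real n"
    using eventually_gt_at_top[of 0]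
    by eventually_elim (simp add: pow_shift[OF F] field_simps)
  ultimately have "(\<lambda>n. ((\<lambda>x. F x + of_int m) ^^ n) 0 / real n) \<longlonglongrightarrow> tn F + of_int m"
    by (rule Lim_transform_eventually)
  then show ?thesis using tn_lim[OF ltype_shift[OF F]] LIMSEQ_unique by blast
qed

lemma tn_conj: assumes F: "ltype F" and G: "ltype G" and K: "ltype K" and c: "\<And>x. G (F x) = K (G x)"
  shows "tn F = tn K"
proof -
  have p: "G ((F ^^ n) x) = (K ^^ n) (G x)" for n x
    by (induction n) (simp_all add: c)
  have "\<bar>(K ^^ n) 0 - (F ^^ n) 0\<bar> \<le> 2" for n
  proof -
    have 1: "\<bar>(K ^^ n) (G 0) - G 0 - (K ^^ n) 0\<bar> \<le> 1" by (rule ltype_bound_abs[OF ltype_pow[OF K]])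
    have 2: "\<bar>G ((F ^^ n) 0) - (F ^^ n) 0 - G 0\<bar> \<le> 1" by (rule ltype_bound_abs[OF G])
    show ?thesis using 1 2 p[of n 0] by linarith
  qed
  then show ?thesis using tn_bdiff[OF F K] by metis
qed

lemma tn_comm: assumes F: "ltype F" and G: "ltype G" and c: "\<And>x. F (G x) = G (F x)"
  shows "tn (F \<circ> G) = tn F + tn G"
proof -
  have cn: "(F ^^ n) (G x) = G ((F ^^ n) x)" for n x by (induction n) (simp_all add: c)
  have p: "((F \<circ> G) ^^ n) x = (F ^^ n) ((G ^^ n) x)" for n x
  proof (induction n arbitrary: x)
    case 0 then show ?case by simp
  next
    case (Suc n)
    have "((F \<circ> G) ^^ Suc n) x = ((F \<circ> G) ^^ n) (F (G x))" by (simp only: funpow_Suc_right comp_apply)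
    also have "\<dots> = (F ^^ n) ((G ^^ n) (F (G x)))" by (rule Suc)
    also have "(G ^^ n) (F (G x)) = F ((G ^^ n) (G x))"
    proof -
      have "(G ^^ n) (F y) = F ((G ^^ n) y)" for y by (induction n) (simp_all add: c)
      then show ?thesis by simp
    qed
    finally show ?case by (simp only: funpow_Suc_right comp_apply)
  qed
  have b: "\<bar>((F \<circ> G) ^^ n) 0 - ((F ^^ n) 0 + (G ^^ n) 0)\<bar> \<le> 1" for n
    using ltype_bound_abs[OF ltype_pow[OF F], of n "(G ^^ n) 0"] p[of n 0] by linarith
  have "(\<lambda>n. (F ^^ n) 0 / real n + (G ^^ n) 0 / real n + (((F \<circ> G) ^^ n) 0 - ((F ^^ n) 0 + (G ^^ n) 0)) / real n)
        \<longlonglongrightarrow> tn F + tn G + 0"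
    by (intro tendsto_add tn_lim F G over_n_zero[OF b])
  then have "(\<lambda>n. ((F \<circ> G) ^^ n) 0 / real n) \<longlonglongrightarrow> tn F + tn G"
    by (simp add: diff_divide_distrib add_divide_distrib)
  then show ?thesis using tn_lim[OF ltype_comp[OF F G]] LIMSEQ_unique by blast
qed


lemma is_lift_ltype: "is_lift f F \<Longrightarrow> ltype F"
  by (simp add: is_lift_def ltype_def strict_mono_mono)

lemma circ_S1[simp]: "circ x \<in> S1"
  by (simp add: circ_def S1_def)

lemma lift_comp: assumes "is_lift f F" "is_lift h H" shows "is_lift (compose S1 f h) (F \<circ> H)"
proof -
  have c: "continuous_on UNIV F" "continuous_on UNIV H" and s: "surj F" "surj H"
    using assms by (auto simp: is_lift_def)
  have "continuous_on UNIV (F \<circ> H)"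
    by (rule continuous_on_compose[OF c(2)]) (simp add: s c)
  moreover have "surj (F \<circ> H)" by (rule comp_surj[OF s(2) s(1)])
  moreover have "strict_mono (F \<circ> H)" using assms by (auto simp: is_lift_def strict_mono_def)
  ultimately show ?thesis using assms by (auto simp: is_lift_def compose_def)
qed

lemma cis_eq_int: assumes "cis a = cis b" shows "\<exists>n::int. a = b + of_int (2 * n) * pi"
proof -
  have "exp (\<i> * complex_of_real a) = exp (\<i> * complex_of_real b)" using assms by (simp add: cis_conv_exp)
  then obtain n :: int where "\<i> * complex_of_real a = \<i> * complex_of_real b + (of_int (2 * n) * pi) * \<i>"
    by (auto simp: exp_eq)
  then have "complex_of_real a = complex_of_real (b + of_int (2 * n) * pi)"
    by (simp add: algebra_simps) (metis mult.commute mult_cancel_left complex_i_not_zero distrib_left)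
  then show ?thesis by (intro exI[of _ n]) (simp only: of_real_eq_iff)
qed

lemma lift_unique: assumes F: "is_lift f F" and F': "is_lift f F'"
  shows "\<exists>m::int. \<forall>x. F' x = F x + of_int m"
proof -
  have int: "F' x - F x \<in> \<int>" for x
  proof -
    have "cis (2 * pi * F' x) = cis (2 * pi * F x)"
      using F F' by (auto simp: is_lift_def circ_def)
    then obtain n :: int where "2 * pi * F' x = 2 * pi * F x + of_int (2 * n) * pi"
      using cis_eq_int by blast
    then have "2 * pi * (F' x - F x - of_int n) = 0" by (simp add: algebra_simps)
    then have "F' x - F x = of_int n" by simp
    then show ?thesis by simp
  qed
  have "(\<lambda>x. F' x - F x) constant_on UNIV"
  proof (rule continuous_discrete_range_constant)
    show "connected (UNIV :: real set)" by simp
    show "continuous_on UNIV (\<lambda>x. F' x - F x)"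
      using F F' by (intro continuous_intros) (auto simp: is_lift_def)
    fix x :: real
    show "\<exists>e>0. \<forall>y. y \<in> UNIV \<and> F' y - F y \<noteq> F' x - F x \<longrightarrow> e \<le> norm (F' y - F y - (F' x - F x))"
    proof (intro exI[of _ 1] conjI allI impI)
      fix y assume "y \<in> UNIV \<and> F' y - F y \<noteq> F' x - F x"
      moreover obtain a b where "F' y - F y = of_int a" "F' x - F x = of_int b"
        using int[of y] int[of x] by (metis Ints_cases)
      ultimately show "1 \<le> norm (F' y - F y - (F' x - F x))" by auto
    qed simp
  qed
  then obtain c where c: "\<And>x. F' x - F x = c" by (auto simp: constant_on_def)
  obtain m where "c = of_int m" using int[of 0] c[of 0] by (metis Ints_cases)
  then show ?thesis using c by (intro exI[of _ m]) (auto simp: algebra_simps)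
qed

lemma rot_int: assumes F: "is_lift f F" and i: "tn F = of_int m" shows "rot f = 0"
proof -
  let ?F = "SOME F. is_lift f F"
  have F0: "is_lift f ?F" using F by (rule someI[where P="is_lift f"])
  obtain k :: int where k: "\<And>x. ?F x = F x + of_int k" using lift_unique[OF F F0] by blast
  have "?F = (\<lambda>x. F x + of_int k)" using k by auto
  then have "tn ?F = of_int (m + k)" using tn_shift[OF is_lift_ltype[OF F]] i by simp
  then show ?thesis by (simp add: rot_def tn_def[symmetric] Let_def)
qed

lemma rot_commutator:
  assumes h: "h \<in> homeo_plus" and t: "t \<in> homeo_plus" and z: "z \<in> homeo_plus"
    and e1: "compose S1 z t = compose S1 (compose S1 h t) z"
    and e2: "compose S1 h t = compose S1 t h"
  shows "rot h = 0"
proof -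
  obtain H where H: "is_lift h H" using h by (auto simp: homeo_plus_def)
  obtain Tt where Tt: "is_lift t Tt" using t by (auto simp: homeo_plus_def)
  obtain Zt where Zt: "is_lift z Zt" using z by (auto simp: homeo_plus_def)
  have lH: "ltype H" and lT: "ltype Tt" and lZ: "ltype Zt" using H Tt Zt by (simp_all add: is_lift_ltype)
  have l1: "is_lift (compose S1 z t) (Zt \<circ> Tt)" by (rule lift_comp[OF Zt Tt])
  have l2: "is_lift (compose S1 z t) ((H \<circ> Tt) \<circ> Zt)" unfolding e1 by (intro lift_comp H Tt Zt)
  obtain m :: int where m: "\<And>x. H (Tt (Zt x)) = Zt (Tt x) + of_int m"
    using lift_unique[OF l1 l2] by auto
  have "tn Tt = tn (\<lambda>x. (H \<circ> Tt) x + of_int (- m))"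
    by (rule tn_conj[OF lT lZ ltype_shift[OF ltype_comp[OF lH lT]]]) (simp add: m)
  also have "\<dots> = tn (H \<circ> Tt) - of_int m" using tn_shift[OF ltype_comp[OF lH lT], of "- m"] by simp
  finally have A: "tn Tt = tn (H \<circ> Tt) - of_int m" .
  have l3: "is_lift (compose S1 h t) (H \<circ> Tt)" by (rule lift_comp[OF H Tt])
  have l4: "is_lift (compose S1 h t) (Tt \<circ> H)" unfolding e2 by (rule lift_comp[OF Tt H])
  obtain m' :: int where m': "\<And>x. Tt (H x) = H (Tt x) + of_int m'"
    using lift_unique[OF l3 l4] by auto
  have "tn Tt = tn (\<lambda>x. Tt x + of_int (- m'))"
    by (rule tn_conj[OF lT lH ltype_shift[OF lT]]) (simp add: m')
  also have "\<dots> = tn Tt - of_int m'" using tn_shift[OF lT, of "- m'"] by simp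
  finally have "m' = 0" by simp
  then have "tn (H \<circ> Tt) = tn H + tn Tt" using m' by (intro tn_comm[OF lH lT]) simp
  then have "tn H = of_int m" using A by simp
  then show ?thesis by (rule rot_int[OF H])
qed


lemma AP_mult: "x \<in> aut_plus g \<Longrightarrow> y \<in> aut_plus g \<Longrightarrow>
  x \<otimes>\<^bsub>AutPlus g\<^esub> y = compose (carrier (SG g)) x y"
  by (simp add: AutPlus_def BijGroup_def aut_plus_def auto_def)

lemma HP_mult: "f \<in> homeo_plus \<Longrightarrow> h \<in> homeo_plus \<Longrightarrow> f \<otimes>\<^bsub>HomeoPlus\<^esub> h = compose S1 f h"
  by (simp add: HomeoPlus_def BijGroup_def homeo_plus_def)

lemma aut_plus_compose: assumes x: "x \<in> aut_plus g" and y: "y \<in> aut_plus g"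
  shows "compose (carrier (SG g)) x y \<in> aut_plus g"
proof -
  let ?C = "carrier (SG g)"
  have xa: "x \<in> auto (SG g)" and ya: "y \<in> auto (SG g)" using x y by (simp_all add: aut_plus_def)
  have val: "compose ?C x y X = x (y X)" if "X \<in> ?C" for X using that by (simp add: compose_def)
  have auto: "compose ?C x y \<in> auto (SG g)"
  proof -
    have "compose ?C x y \<in> Bij ?C" using xa ya by (simp add: auto_def compose_Bij)
    moreover have "compose ?C x y \<in> hom (SG g) (SG g)"
    proof (rule homI)
      fix X assume "X \<in> ?C" then show "compose ?C x y X \<in> ?C" using xa ya by (simp add: val auto_closed)
    next
      fix X Y assume XY: "X \<in> ?C" "Y \<in> ?C"
      interpret G: group "SG g" by (rule group_SG)
      have hs: "x \<in> hom (SG g) (SG g)" "y \<in> hom (SG g) (SG g)" using xa ya by (simp_all add: auto_def)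
      show "compose ?C x y (X \<otimes>\<^bsub>SG g\<^esub> Y) = compose ?C x y X \<otimes>\<^bsub>SG g\<^esub> compose ?C x y Y"
        using XY hom_mult[OF hs(2) XY] hom_mult[OF hs(1)] ya by (simp add: val auto_closed)
    qed
    ultimately show ?thesis by (simp add: auto_def)
  qed
  show ?thesis
  proof (rule aut_plusI[OF auto])
    fix X Y assume XY: "X \<in> ?C" "Y \<in> ?C"
    then show "isect g (ab_class (compose ?C x y X)) (ab_class (compose ?C x y Y)) = isect g (ab_class X) (ab_class Y)"
      using x y ya by (simp add: val aut_plus_def auto_closed)
  qed
qed

lemma compose_eqI: "(\<And>X. X \<in> C \<Longrightarrow> f (h X) = f' (h' X)) \<Longrightarrow> compose C f h = compose C f' h'"
  by (auto simp: compose_def fun_eq_iff)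

theorem lemma2p1:
  fixes g :: nat and \<rho> :: "(sword set \<Rightarrow> sword set) \<Rightarrow> (complex \<Rightarrow> complex)"
    and a :: "sword set"
  assumes "g \<ge> 2"
    and "\<rho> \<in> hom (AutPlus g) HomeoPlus"
    and "a \<in> nonsep_scc g"
  shows "rot (\<rho> (inner_aut g a)) = 0"
proof -
  have g: "0 < g" using assms(1) by simp
  let ?C = "carrier (SG g)"
  interpret G: group "SG g" by (rule group_SG)
  obtain \<phi> where \<phi>: "\<phi> \<in> auto (SG g)" and a: "a = \<phi> (sg_class g [(GA 0, False)])"
    using assms(3) by (auto simp: nonsep_scc_def)
  have \<phi>h: "\<phi> \<in> hom (SG g) (SG g)" using \<phi> by (simp add: auto_def)
  define A where "A = sg_class g [(GA 0, False)]"
  define w where "w = sg_class g [(GB 0, True)]"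
  have AC: "A \<in> ?C" and wC: "w \<in> ?C" using g by (simp_all add: A_def w_def sletters_def)
  have TA: "T1 g A = A" using g by (simp add: A_def T1_class s1_def lsub_def sletters_def)
  have Tw: "T1 g w = inv\<^bsub>SG g\<^esub> A \<otimes>\<^bsub>SG g\<^esub> w"
    using g by (simp add: A_def w_def T1_class s1_def lsub_def sletters_def inv_class mult_class winv_def linv_def)
  have T1a: "T1 g \<in> auto (SG g)" by (rule T1_auto[OF g])
  have T1h: "T1 g \<in> hom (SG g) (SG g)" using T1a by (simp add: auto_def)
  define T where "T = compose ?C \<phi> (compose ?C (T1 g) (ainv g \<phi>))"
  have TP: "T \<in> aut_plus g" unfolding T_def by (rule conj_aut_plus[OF g \<phi> T1_aut_plus[OF g]])
  have Tval: "T X = \<phi> (T1 g (ainv g \<phi> X))" if "X \<in> ?C" for X using that by (simp add: T_def compose_def)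
  have Ta: "T \<in> auto (SG g)" using TP by (simp add: aut_plus_def)
  have Th: "T \<in> hom (SG g) (SG g)" using Ta by (simp add: auto_def)
  have aC: "a \<in> ?C" using a \<phi> AC by (simp add: A_def[symmetric] auto_closed)
  define w' where "w' = \<phi> w"
  have w'C: "w' \<in> ?C" using \<phi> wC by (simp add: w'_def auto_closed)
  have Ta_eq: "T a = a" using a AC by (simp add: A_def[symmetric] Tval auto_closed \<phi> ainv_l TA)
  have Tw_eq: "T w' = inv\<^bsub>SG g\<^esub> a \<otimes>\<^bsub>SG g\<^esub> w'"
  proof -
    have "T w' = \<phi> (inv\<^bsub>SG g\<^esub> A \<otimes>\<^bsub>SG g\<^esub> w)" using wC \<phi> by (simp add: w'_def Tval auto_closed ainv_l Tw)
    also have "\<dots> = inv\<^bsub>SG g\<^esub> a \<otimes>\<^bsub>SG g\<^esub> w'"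
      using AC wC \<phi>h by (simp add: hom_mult group_hom.hom_inv[OF group_hom_SG[OF \<phi>h]] a A_def[symmetric] w'_def)
    finally show ?thesis .
  qed
  define I where "I = inner_aut g a"
  define Z where "Z = inner_aut g w'"
  have IP: "I \<in> aut_plus g" and ZP: "Z \<in> aut_plus g" using aC w'C by (simp_all add: I_def Z_def inner_aut_plus)
  interpret Th: group_hom "SG g" "SG g" T by (rule group_hom_SG[OF Th])
  have TX: "T X \<in> ?C" if "X \<in> ?C" for X using that Ta by (simp add: auto_closed)
  have e2: "compose ?C I T = compose ?C T I"
  proof (rule compose_eqI)
    fix X assume X: "X \<in> ?C"
    show "I (T X) = T (I X)"
      using X aC TX[OF X] by (simp add: I_def inner_aut_def Ta_eq)
  qed
  have e1: "compose ?C Z T = compose ?C (compose ?C I T) Z"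
  proof (rule compose_eqI)
    fix X assume X: "X \<in> ?C"
    have ZX: "Z X \<in> ?C" using X w'C by (simp add: Z_def inner_aut_def)
    have "compose ?C I T (Z X) = a \<otimes>\<^bsub>SG g\<^esub> T (w' \<otimes>\<^bsub>SG g\<^esub> X \<otimes>\<^bsub>SG g\<^esub> inv\<^bsub>SG g\<^esub> w') \<otimes>\<^bsub>SG g\<^esub> inv\<^bsub>SG g\<^esub> a"
      using ZX X aC TX by (simp add: compose_def I_def Z_def inner_aut_def)
    also have "T (w' \<otimes>\<^bsub>SG g\<^esub> X \<otimes>\<^bsub>SG g\<^esub> inv\<^bsub>SG g\<^esub> w') =
        (inv\<^bsub>SG g\<^esub> a \<otimes>\<^bsub>SG g\<^esub> w') \<otimes>\<^bsub>SG g\<^esub> T X \<otimes>\<^bsub>SG g\<^esub> inv\<^bsub>SG g\<^esub> (inv\<^bsub>SG g\<^esub> a \<otimes>\<^bsub>SG g\<^esub> w')"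
      using X w'C by (simp add: Th.hom_inv Tw_eq)
    also have c1: "\<And>x y. x \<in> ?C \<Longrightarrow> y \<in> ?C \<Longrightarrow> x \<otimes>\<^bsub>SG g\<^esub> (inv\<^bsub>SG g\<^esub> x \<otimes>\<^bsub>SG g\<^esub> y) = y"
      by (simp add: G.m_assoc[symmetric] G.r_inv)
    then have "a \<otimes>\<^bsub>SG g\<^esub> ((inv\<^bsub>SG g\<^esub> a \<otimes>\<^bsub>SG g\<^esub> w') \<otimes>\<^bsub>SG g\<^esub> T X \<otimes>\<^bsub>SG g\<^esub> inv\<^bsub>SG g\<^esub> (inv\<^bsub>SG g\<^esub> a \<otimes>\<^bsub>SG g\<^esub> w')) \<otimes>\<^bsub>SG g\<^esub> inv\<^bsub>SG g\<^esub> a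
        = w' \<otimes>\<^bsub>SG g\<^esub> T X \<otimes>\<^bsub>SG g\<^esub> inv\<^bsub>SG g\<^esub> w'"
      using X w'C aC TX[OF X] by (simp add: G.inv_mult_group G.m_assoc G.r_inv)
    finally show "Z (T X) = compose ?C I T (Z X)" using X TX[OF X] by (simp add: Z_def inner_aut_def)
  qed
  have ITP: "compose ?C I T \<in> aut_plus g" by (rule aut_plus_compose[OF IP TP])
  have \<rho>h: "\<rho> \<in> hom (AutPlus g) HomeoPlus" by (rule assms(2))
  have cAP: "carrier (AutPlus g) = aut_plus g" by (simp add: AutPlus_def)
  have cHP: "carrier HomeoPlus = homeo_plus" by (simp add: HomeoPlus_def)
  have \<rho>c: "\<rho> x \<in> homeo_plus" if "x \<in> aut_plus g" for x
    using \<rho>h that cAP cHP by (auto simp: hom_def)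
  have \<rho>m: "\<rho> (compose ?C x y) = compose S1 (\<rho> x) (\<rho> y)" if "x \<in> aut_plus g" "y \<in> aut_plus g" for x y
  proof -
    have "\<rho> (x \<otimes>\<^bsub>AutPlus g\<^esub> y) = \<rho> x \<otimes>\<^bsub>HomeoPlus\<^esub> \<rho> y"
      using \<rho>h that cAP by (simp add: hom_def)
    then show ?thesis using that by (simp add: AP_mult HP_mult \<rho>c)
  qed
  show ?thesis
  proof (rule rot_commutator[of _ "\<rho> T" "\<rho> Z"])
    show "\<rho> (inner_aut g a) \<in> homeo_plus" using IP by (simp add: I_def[symmetric] \<rho>c)
    show "\<rho> T \<in> homeo_plus" "\<rho> Z \<in> homeo_plus" using TP ZP by (simp_all add: \<rho>c)
    show "compose S1 (\<rho> Z) (\<rho> T) = compose S1 (compose S1 (\<rho> (inner_aut g a)) (\<rho> T)) (\<rho> Z)"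
      using e1 ZP TP IP ITP by (simp add: \<rho>m[symmetric] I_def[symmetric])
    show "compose S1 (\<rho> (inner_aut g a)) (\<rho> T) = compose S1 (\<rho> T) (\<rho> (inner_aut g a))"
      using e2 TP IP by (simp add: \<rho>m[symmetric] I_def[symmetric])
  qed
qed


end
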